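(* Let $(X_0,\delta)$ be an infinite countable metric space which is uniformly discrete, has bounded geometry and has Yu's Property A. Let $\mathsf H\in\mathbb B[\ell^2(X_0)]$ be a self-adjoint band dominated operator, with matrix $H:X_0\times X_0\to\mathbb C$, i.e. $[\mathsf H(u)](x)=\sum_{y\in X_0}H(x,y)u(y)$. For every $M_0\in\mathbf S_0$ let $\mathsf H_{M_0}\in\mathbb B[\ell^2(M_0)]$ be given by $[\mathsf H_{M_0}(v)](a)=\sum_{b\in M_0}H(a,b)v(b)$ for $a\in M_0$. Then $$\inf \mathrm{sp}_{\rm ess}(\mathsf H)=\sup_{M_0\in\mathbf S_0}\big[\inf\mathrm{sp}(\mathsf H_{M_0})\big],\qquad \sup \mathrm{sp}_{\rm ess}(\mathsf H)=\inf_{M_0\in\mathbf S_0}\big[\sup\mathrm{sp}(\mathsf H_{M_0})\big].$$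
   Context: Uniform discreteness: there is $\alpha>0$ with $\delta(x,x')\ge\alpha$ whenever $x\ne x'$. Bounded geometry: for every $r>0$ there is $N_r<\infty$ such that every closed ball of radius $r$ has fewer than $N_r$ elements. For $r\ge0$ let $\Delta_r=\{(x,x')\in X_0\times X_0:\delta(x,x')\le r\}$. Property A: there is a sequence of positive definite kernels $K_n:X_0\times X_0\to\mathbb R$, each vanishing outside some $\Delta_{r_n}$ (band kernels), converging to the constant $1$ uniformly on each $\Delta_r$. An operator $\mathsf H\in\mathbb B[\ell^2(X_0)]$ with matrix $H$ is a band operator if $\sup_{x,y}|H(x,y)|<\infty$ and there is $r>0$ with $H(x,y)=0$ when $\delta(x,y)>r$; it is band dominated if it is a norm limit of band operators. $\mathbf S_0$ denotes the family of subsets $M_0\subset X_0$ with finite complement in $X_0$. $\mathrm{sp}$ denotes spectrum and $\mathrm{sp}_{\rm ess}$ essential spectrum. *)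

theory Defs
  imports "HOL-Analysis.Analysis"
begin

(* l^2(A), realised as square-summable functions 'a => complex vanishing outside A *)
definition ell2_on :: "'a set \<Rightarrow> ('a \<Rightarrow> complex) set" where
  "ell2_on A = {u. (\<forall>x. x \<notin> A \<longrightarrow> u x = 0) \<and> (\<lambda>x. (cmod (u x))^2) summable_on UNIV}"

definition ell2_norm :: "('a \<Rightarrow> complex) \<Rightarrow> real" where
  "ell2_norm u = sqrt (infsum (\<lambda>x. (cmod (u x))^2) UNIV)"

definition ell2_inner :: "('a \<Rightarrow> complex) \<Rightarrow> ('a \<Rightarrow> complex) \<Rightarrow> complex" where
  "ell2_inner u v = infsum (\<lambda>x. u x * cnj (v x)) UNIV"

definition bounded_on :: "'a set \<Rightarrow> (('a \<Rightarrow> complex) \<Rightarrow> ('a \<Rightarrow> complex)) \<Rightarrow> bool" where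
  "bounded_on A T \<longleftrightarrow> (\<forall>u\<in>ell2_on A. T u \<in> ell2_on A) \<and>
     (\<exists>C. \<forall>u\<in>ell2_on A. ell2_norm (T u) \<le> C * ell2_norm u)"

definition mat_op :: "('a \<Rightarrow> 'a \<Rightarrow> complex) \<Rightarrow> 'a set \<Rightarrow> ('a \<Rightarrow> complex) \<Rightarrow> 'a \<Rightarrow> complex" where
  "mat_op H A u = (\<lambda>x. if x \<in> A then infsum (\<lambda>y. H x y * u y) A else 0)"

definition bounded_matrix_on :: "'a set \<Rightarrow> ('a \<Rightarrow> 'a \<Rightarrow> complex) \<Rightarrow> bool" where
  "bounded_matrix_on A H \<longleftrightarrow>
     (\<forall>u\<in>ell2_on A. \<forall>x\<in>A. (\<lambda>y. H x y * u y) summable_on A) \<and> bounded_on A (mat_op H A)"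

definition self_adjoint_on :: "'a set \<Rightarrow> (('a \<Rightarrow> complex) \<Rightarrow> ('a \<Rightarrow> complex)) \<Rightarrow> bool" where
  "self_adjoint_on A T \<longleftrightarrow>
     (\<forall>u\<in>ell2_on A. \<forall>v\<in>ell2_on A. ell2_inner (T u) v = ell2_inner u (T v))"

definition band_matrix :: "('a \<Rightarrow> 'a \<Rightarrow> real) \<Rightarrow> ('a \<Rightarrow> 'a \<Rightarrow> complex) \<Rightarrow> bool" where
  "band_matrix \<delta> B \<longleftrightarrow> (\<exists>C. \<forall>x y. cmod (B x y) \<le> C) \<and>
     (\<exists>r>0. \<forall>x y. \<delta> x y > r \<longrightarrow> B x y = 0)"

definition band_dominated :: "('a \<Rightarrow> 'a \<Rightarrow> real) \<Rightarrow> ('a \<Rightarrow> 'a \<Rightarrow> complex) \<Rightarrow> bool" where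
  "band_dominated \<delta> H \<longleftrightarrow> (\<forall>\<epsilon>>0. \<exists>B. band_matrix \<delta> B \<and>
     (\<forall>u\<in>ell2_on UNIV. ell2_norm (\<lambda>x. mat_op H UNIV u x - mat_op B UNIV u x) \<le> \<epsilon> * ell2_norm u))"

definition shift_op :: "(('a \<Rightarrow> complex) \<Rightarrow> ('a \<Rightarrow> complex)) \<Rightarrow> complex \<Rightarrow> ('a \<Rightarrow> complex) \<Rightarrow> ('a \<Rightarrow> complex)" where
  "shift_op T z = (\<lambda>u x. T u x - z * u x)"

definition invertible_on :: "'a set \<Rightarrow> (('a \<Rightarrow> complex) \<Rightarrow> ('a \<Rightarrow> complex)) \<Rightarrow> bool" where
  "invertible_on A T \<longleftrightarrow> (\<exists>S. bounded_on A S \<and> (\<forall>u\<in>ell2_on A. S (T u) = u \<and> T (S u) = u))"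

definition spectrum_on :: "'a set \<Rightarrow> (('a \<Rightarrow> complex) \<Rightarrow> ('a \<Rightarrow> complex)) \<Rightarrow> complex set" where
  "spectrum_on A T = {z. \<not> invertible_on A (shift_op T z)}"

definition lincomb :: "('a \<Rightarrow> complex) set \<Rightarrow> (('a \<Rightarrow> complex) \<Rightarrow> complex) \<Rightarrow> 'a \<Rightarrow> complex" where
  "lincomb F c = (\<lambda>x. \<Sum>f\<in>F. c f * f x)"

definition fredholm_on :: "'a set \<Rightarrow> (('a \<Rightarrow> complex) \<Rightarrow> ('a \<Rightarrow> complex)) \<Rightarrow> bool" where
  "fredholm_on A T \<longleftrightarrow>
    (\<exists>F. finite F \<and> F \<subseteq> ell2_on A \<and>
        (\<forall>u\<in>ell2_on A. T u = (\<lambda>_. 0) \<longrightarrow> (\<exists>c. u = lincomb F c))) \<and>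
    (\<exists>F. finite F \<and> F \<subseteq> ell2_on A \<and>
        (\<forall>v\<in>ell2_on A. \<exists>u\<in>ell2_on A. \<exists>c. v = (\<lambda>x. T u x + lincomb F c x)))"

definition ess_spectrum_on :: "'a set \<Rightarrow> (('a \<Rightarrow> complex) \<Rightarrow> ('a \<Rightarrow> complex)) \<Rightarrow> complex set" where
  "ess_spectrum_on A T = {z. \<not> fredholm_on A (shift_op T z)}"

definition real_points :: "complex set \<Rightarrow> real set" where
  "real_points S = {t. complex_of_real t \<in> S}"

definition uniformly_discrete :: "('a \<Rightarrow> 'a \<Rightarrow> real) \<Rightarrow> bool" where
  "uniformly_discrete \<delta> \<longleftrightarrow> (\<exists>\<alpha>>0. \<forall>x x'. x \<noteq> x' \<longrightarrow> \<delta> x x' \<ge> \<alpha>)"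

definition bounded_geometry :: "('a \<Rightarrow> 'a \<Rightarrow> real) \<Rightarrow> bool" where
  "bounded_geometry \<delta> \<longleftrightarrow> (\<forall>r>0. \<exists>N::nat. \<forall>x.
      finite {y. \<delta> x y \<le> r} \<and> card {y. \<delta> x y \<le> r} < N)"

definition pos_def_kernel :: "('a \<Rightarrow> 'a \<Rightarrow> real) \<Rightarrow> bool" where
  "pos_def_kernel K \<longleftrightarrow> (\<forall>x y. K x y = K y x) \<and>
     (\<forall>F c. finite F \<longrightarrow> (\<Sum>x\<in>F. \<Sum>y\<in>F. c x * c y * K x y) \<ge> (0::real))"

definition property_A :: "('a \<Rightarrow> 'a \<Rightarrow> real) \<Rightarrow> bool" where
  "property_A \<delta> \<longleftrightarrow> (\<exists>K :: nat \<Rightarrow> 'a \<Rightarrow> 'a \<Rightarrow> real.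
     (\<forall>n. pos_def_kernel (K n)) \<and>
     (\<forall>n. \<exists>r. \<forall>x y. \<delta> x y > r \<longrightarrow> K n x y = 0) \<and>
     (\<forall>r. \<forall>\<epsilon>>0. \<exists>N. \<forall>n\<ge>N. \<forall>x y. \<delta> x y \<le> r \<longrightarrow> \<bar>K n x y - 1\<bar> < \<epsilon>))"

end

theory Submission
  imports Defs
begin


definition l2 :: "('a \<Rightarrow> complex) \<Rightarrow> bool" where
  "l2 u \<longleftrightarrow> (\<lambda>x. (cmod (u x))^2) summable_on UNIV"

lemma ell2_on_iff: "u \<in> ell2_on A \<longleftrightarrow> (\<forall>x. x \<notin> A \<longrightarrow> u x = 0) \<and> l2 u"
  by (simp add: ell2_on_def l2_def)

lemma nrm_nonneg: "ell2_norm u \<ge> 0"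
  unfolding ell2_norm_def by (simp add: infsum_nonneg)

lemma nrm_sq: "(ell2_norm u)^2 = infsum (\<lambda>x. (cmod (u x))^2) UNIV"
  unfolding ell2_norm_def by (simp add: infsum_nonneg)

lemma L2_le_nrm:
  assumes "l2 u" "finite F"
  shows "L2_set (\<lambda>x. cmod (u x)) F \<le> ell2_norm u"
proof -
  have "(\<Sum>x\<in>F. (cmod (u x))^2) \<le> infsum (\<lambda>x. (cmod (u x))^2) UNIV"
    using assms by (intro finite_sum_le_infsum) (auto simp: l2_def)
  then show ?thesis unfolding L2_set_def ell2_norm_def by (simp add: real_sqrt_le_mono)
qed

lemma l2_boundI:
  assumes "\<And>F. finite F \<Longrightarrow> L2_set (\<lambda>x. cmod (u x)) F \<le> B"
  shows "l2 u" "ell2_norm u \<le> B"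
proof -
  have B0: "B \<ge> 0" using assms[of "{}"] by simp
  have fs: "(\<Sum>x\<in>F. (cmod (u x))^2) \<le> B^2" if "finite F" for F
  proof -
    have "sqrt (\<Sum>x\<in>F. (cmod (u x))^2) \<le> B" using assms[OF that] by (simp add: L2_set_def)
    then have "(sqrt (\<Sum>x\<in>F. (cmod (u x))^2))^2 \<le> B^2"
      by (intro power_mono) (auto simp: sum_nonneg)
    then show ?thesis by (simp add: sum_nonneg)
  qed
  show S: "l2 u" unfolding l2_def
    by (rule nonneg_bdd_above_summable_on) (auto intro!: bdd_aboveI2 fs)
  have "infsum (\<lambda>x. (cmod (u x))^2) UNIV \<le> B^2"
    using S by (intro infsum_le_finite_sums) (auto simp: l2_def fs)
  then show "ell2_norm u \<le> B" unfolding ell2_norm_def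
    using B0 real_sqrt_le_mono[of _ "B^2"] by fastforce
qed

lemma l2_add:
  assumes "l2 u" "l2 v"
  shows "l2 (\<lambda>x. u x + v x)" "ell2_norm (\<lambda>x. u x + v x) \<le> ell2_norm u + ell2_norm v"
proof -
  have *: "L2_set (\<lambda>x. cmod (u x + v x)) F \<le> ell2_norm u + ell2_norm v" if "finite F" for F
  proof -
    have "L2_set (\<lambda>x. cmod (u x + v x)) F \<le> L2_set (\<lambda>x. cmod (u x) + cmod (v x)) F"
      by (rule L2_set_mono) (auto simp: norm_triangle_ineq)
    also have "\<dots> \<le> L2_set (\<lambda>x. cmod (u x)) F + L2_set (\<lambda>x. cmod (v x)) F"
      by (rule L2_set_triangle_ineq)
    also have "\<dots> \<le> ell2_norm u + ell2_norm v"
      using L2_le_nrm[OF assms(1) that] L2_le_nrm[OF assms(2) that] by (rule add_mono)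
    finally show ?thesis .
  qed
  show "l2 (\<lambda>x. u x + v x)" by (rule l2_boundI(1)[OF *])
  show "ell2_norm (\<lambda>x. u x + v x) \<le> ell2_norm u + ell2_norm v" by (rule l2_boundI(2)[OF *])
qed

lemma l2_scale_le:
  assumes "l2 u"
  shows "l2 (\<lambda>x. c * u x)" "ell2_norm (\<lambda>x. c * u x) \<le> cmod c * ell2_norm u"
proof -
  have *: "L2_set (\<lambda>x. cmod (c * u x)) F \<le> cmod c * ell2_norm u" if "finite F" for F
  proof -
    have "L2_set (\<lambda>x. cmod (c * u x)) F = cmod c * L2_set (\<lambda>x. cmod (u x)) F"
      by (simp add: L2_set_right_distrib norm_mult)
    also have "\<dots> \<le> cmod c * ell2_norm u"
      using L2_le_nrm[OF assms that] by (simp add: mult_left_mono)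
    finally show ?thesis .
  qed
  show "l2 (\<lambda>x. c * u x)" by (rule l2_boundI(1)[OF *])
  show "ell2_norm (\<lambda>x. c * u x) \<le> cmod c * ell2_norm u" by (rule l2_boundI(2)[OF *])
qed

lemma l2_scale:
  assumes "l2 u"
  shows "l2 (\<lambda>x. c * u x)" "ell2_norm (\<lambda>x. c * u x) = cmod c * ell2_norm u"
proof -
  show "l2 (\<lambda>x. c * u x)" using l2_scale_le assms by blast
  show "ell2_norm (\<lambda>x. c * u x) = cmod c * ell2_norm u"
  proof (cases "c = 0")
    case True then show ?thesis by (simp add: ell2_norm_def)
  next
    case False
    have "(\<lambda>x. inverse c * (c * u x)) = u" using False by (auto simp: field_simps)
    then have "ell2_norm u = ell2_norm (\<lambda>x. inverse c * (c * u x))" by simp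
    also have "\<dots> \<le> cmod (inverse c) * ell2_norm (\<lambda>x. c * u x)"
      by (rule l2_scale_le(2)) (rule l2_scale_le(1)[OF assms])
    finally have "cmod c * ell2_norm u \<le> cmod c * (cmod (inverse c) * ell2_norm (\<lambda>x. c * u x))"
      by (rule mult_left_mono) simp
    also have "\<dots> = ell2_norm (\<lambda>x. c * u x)" using False by (simp add: norm_inverse)
    finally have "cmod c * ell2_norm u \<le> ell2_norm (\<lambda>x. c * u x)" .
    then show ?thesis using l2_scale_le(2)[OF assms, of c] by linarith
  qed
qed

lemma l2_uminus: "l2 u \<Longrightarrow> l2 (\<lambda>x. - u x)" "ell2_norm (\<lambda>x. - u x) = ell2_norm u"
  using l2_scale[of u "-1"] by (simp_all add: ell2_norm_def)

lemma l2_diff: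
  assumes "l2 u" "l2 v"
  shows "l2 (\<lambda>x. u x - v x)" "ell2_norm (\<lambda>x. u x - v x) \<le> ell2_norm u + ell2_norm v"
  using l2_add[OF assms(1) l2_uminus(1)[OF assms(2)]] l2_uminus(2)[of v] by simp_all

lemma l2_point: "l2 u \<Longrightarrow> cmod (u x) \<le> ell2_norm u"
  using L2_le_nrm[of u "{x}"] by (simp add: L2_set_def)

lemma l2_zero[simp]: "l2 (\<lambda>x. 0)"
  by (simp add: l2_def)

lemma nrm_zero[simp]: "ell2_norm (\<lambda>x. 0) = 0"
  by (simp add: ell2_norm_def)

lemma nrm_eq0: "l2 u \<Longrightarrow> ell2_norm u = 0 \<Longrightarrow> u = (\<lambda>x. 0)"
  using l2_point[of u] by fastforce

lemma l2_finite_support: "finite {x. u x \<noteq> 0} \<Longrightarrow> l2 u"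
  unfolding l2_def by (rule finite_nonzero_values_imp_summable_on) simp

lemma ip_abs_summable:
  assumes "l2 u" "l2 v"
  shows "(\<lambda>x. norm (u x * cnj (v x))) summable_on UNIV"
    "infsum (\<lambda>x. norm (u x * cnj (v x))) UNIV \<le> ell2_norm u * ell2_norm v"
proof -
  have *: "(\<Sum>x\<in>F. norm (u x * cnj (v x))) \<le> ell2_norm u * ell2_norm v" if "finite F" for F
  proof -
    have "(\<Sum>x\<in>F. norm (u x * cnj (v x))) = (\<Sum>x\<in>F. \<bar>cmod (u x)\<bar> * \<bar>cmod (v x)\<bar>)"
      by (simp add: norm_mult)
    also have "\<dots> \<le> L2_set (\<lambda>x. cmod (u x)) F * L2_set (\<lambda>x. cmod (v x)) F"
      by (rule L2_set_mult_ineq)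
    also have "\<dots> \<le> ell2_norm u * ell2_norm v"
      using L2_le_nrm assms that by (intro mult_mono) (auto simp: nrm_nonneg)
    finally show ?thesis .
  qed
  show S: "(\<lambda>x. norm (u x * cnj (v x))) summable_on UNIV"
    by (rule nonneg_bdd_above_summable_on) (auto intro!: bdd_aboveI2 *)
  show "infsum (\<lambda>x. norm (u x * cnj (v x))) UNIV \<le> ell2_norm u * ell2_norm v"
    using S by (intro infsum_le_finite_sums) (auto simp: *)
qed

lemma ip_summable: "l2 u \<Longrightarrow> l2 v \<Longrightarrow> (\<lambda>x. u x * cnj (v x)) summable_on UNIV"
  using ip_abs_summable(1) summable_on_iff_abs_summable_on_complex by blast

lemma ip_CS: assumes "l2 u" "l2 v" shows "cmod (ell2_inner u v) \<le> ell2_norm u * ell2_norm v"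
proof -
  have "cmod (ell2_inner u v) \<le> infsum (\<lambda>x. norm (u x * cnj (v x))) UNIV"
    unfolding ell2_inner_def by (rule norm_infsum_bound) (rule ip_abs_summable(1)[OF assms])
  also have "\<dots> \<le> ell2_norm u * ell2_norm v" by (rule ip_abs_summable(2)[OF assms])
  finally show ?thesis .
qed



lemma ip_add_left:
  assumes "l2 u" "l2 v" "l2 w"
  shows "ell2_inner (\<lambda>x. u x + v x) w = ell2_inner u w + ell2_inner v w"
  unfolding ell2_inner_def distrib_right
  by (rule infsum_add) (use ip_summable assms in auto)

lemma ip_scale_left:
  assumes "l2 u" "l2 w"
  shows "ell2_inner (\<lambda>x. c * u x) w = c * ell2_inner u w"
  unfolding ell2_inner_def mult.assoc
  by (rule infsum_cmult_right) (use ip_summable assms in auto)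

lemma ip_cnj: "ell2_inner v u = cnj (ell2_inner u v)"
  unfolding ell2_inner_def infsum_cnj[symmetric] by (simp add: mult.commute)

lemma ip_self:
  assumes "l2 u"
  shows "ell2_inner u u = complex_of_real ((ell2_norm u)^2)"
proof -
  have e: "(\<lambda>x. u x * cnj (u x)) = (\<lambda>x. complex_of_real ((cmod (u x))^2))"
    by (rule ext) (rule complex_norm_square[symmetric])
  have "((\<lambda>x. (cmod (u x))^2) has_sum infsum (\<lambda>x. (cmod (u x))^2) UNIV) UNIV"
    using assms by (simp add: l2_def)
  then have "((\<lambda>x. complex_of_real ((cmod (u x))^2)) has_sum complex_of_real (infsum (\<lambda>x. (cmod (u x))^2) UNIV)) UNIV"
    by (rule has_sum_of_real)
  then show ?thesis unfolding ell2_inner_def e nrm_sq by (rule infsumI)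
qed

lemma ip_self_Re: "l2 u \<Longrightarrow> Re (ell2_inner u u) = (ell2_norm u)^2"
  by (simp add: ip_self)

lemma ip_uminus_left:
  assumes "l2 u" "l2 w"
  shows "ell2_inner (\<lambda>x. - u x) w = - ell2_inner u w"
  using ip_scale_left[OF assms, of "-1"] by simp

lemma ip_diff_left:
  assumes "l2 u" "l2 v" "l2 w"
  shows "ell2_inner (\<lambda>x. u x - v x) w = ell2_inner u w - ell2_inner v w"
  using ip_add_left[OF assms(1) l2_uminus(1)[OF assms(2)] assms(3)] ip_uminus_left[OF assms(2,3)]
  by simp

lemma ip_add_right:
  assumes "l2 u" "l2 v" "l2 w"
  shows "ell2_inner w (\<lambda>x. u x + v x) = ell2_inner w u + ell2_inner w v"
  by (subst (1 2 3) ip_cnj) (simp add: ip_add_left assms)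

lemma ip_scale_right:
  assumes "l2 u" "l2 w"
  shows "ell2_inner w (\<lambda>x. c * u x) = cnj c * ell2_inner w u"
  by (subst (1 2) ip_cnj) (simp add: ip_scale_left assms)

lemma ip_diff_right:
  assumes "l2 u" "l2 v" "l2 w"
  shows "ell2_inner w (\<lambda>x. u x - v x) = ell2_inner w u - ell2_inner w v"
  by (subst (1 2 3) ip_cnj) (simp add: ip_diff_left assms)

lemma nrm_expand:
  assumes "l2 u" "l2 v"
  shows "(ell2_norm (\<lambda>x. u x - v x))^2 = (ell2_norm u)^2 - 2 * Re (ell2_inner v u) + (ell2_norm v)^2"
proof -
  have d: "l2 (\<lambda>x. u x - v x)" using l2_diff assms by blast
  have "complex_of_real ((ell2_norm (\<lambda>x. u x - v x))^2) = ell2_inner (\<lambda>x. u x - v x) (\<lambda>x. u x - v x)"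
    using ip_self[OF d] by simp
  also have "\<dots> = ell2_inner u u - ell2_inner u v - (ell2_inner v u - ell2_inner v v)"
    using assms d by (simp add: ip_diff_left ip_diff_right)
  finally have "complex_of_real ((ell2_norm (\<lambda>x. u x - v x))^2)
      = ell2_inner u u - ell2_inner u v - (ell2_inner v u - ell2_inner v v)" .
  then have "(ell2_norm (\<lambda>x. u x - v x))^2 = Re (ell2_inner u u - ell2_inner u v - (ell2_inner v u - ell2_inner v v))"
    by (metis Re_complex_of_real)
  also have "\<dots> = (ell2_norm u)^2 - 2 * Re (ell2_inner v u) + (ell2_norm v)^2"
    using assms by (simp add: ip_self_Re ip_cnj[of u v])
  finally show ?thesis .
qed

lemma nrm_tri3:
  assumes "l2 a" "l2 b" "l2 c"
  shows "ell2_norm (\<lambda>x. a x - c x) \<le> ell2_norm (\<lambda>x. a x - b x) + ell2_norm (\<lambda>x. b x - c x)"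
  using l2_add(2)[OF l2_diff(1)[OF assms(1,2)] l2_diff(1)[OF assms(2,3)]] by simp

lemma nrm_sym: "ell2_norm (\<lambda>x. a x - b x) = ell2_norm (\<lambda>x. b x - a x)"
  unfolding ell2_norm_def by (simp add: norm_minus_commute)

lemma ell2_complete:
  assumes s: "\<And>n. s n \<in> ell2_on A" and b: "b \<longlonglongrightarrow> 0"
    and C: "\<And>n m. n \<le> m \<Longrightarrow> ell2_norm (\<lambda>x. s m x - s n x) \<le> b n"
  shows "\<exists>v \<in> ell2_on A. \<forall>n. ell2_norm (\<lambda>x. v x - s n x) \<le> b n"
proof -
  have l2s: "l2 (s n)" for n using s by (simp add: ell2_on_iff)
  have pt: "cmod (s m x - s n x) \<le> b n" if "n \<le> m" for m n x
    using l2_point[OF l2_diff(1)[OF l2s[of m] l2s[of n]], of x] C[OF that] by simp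
  have cau: "Cauchy (\<lambda>n. s n x)" for x
  proof (rule metric_CauchyI)
    fix e :: real assume "e > 0"
    then obtain N where N: "\<And>n. n \<ge> N \<Longrightarrow> \<bar>b n\<bar> < e"
      using b unfolding LIMSEQ_def by (metis dist_real_def diff_zero)
    show "\<exists>M. \<forall>m\<ge>M. \<forall>n\<ge>M. dist (s m x) (s n x) < e"
    proof (intro exI allI impI)
      fix m n assume "m \<ge> N" "n \<ge> N"
      show "dist (s m x) (s n x) < e"
      proof (cases "n \<le> m")
        case True then show ?thesis using pt[OF True, of x] N[OF \<open>n \<ge> N\<close>] by (simp add: dist_norm)
      next
        case False then have "m \<le> n" by simp
        then show ?thesis using pt[of m n x] N[OF \<open>m \<ge> N\<close>] by (simp add: dist_norm norm_minus_commute)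
      qed
    qed
  qed
  define v where "v x = lim (\<lambda>n. s n x)" for x
  have lim: "(\<lambda>n. s n x) \<longlonglongrightarrow> v x" for x
    using cau[of x] Cauchy_convergent_iff convergent_LIMSEQ_iff v_def by metis
  have bound: "ell2_norm (\<lambda>x. v x - s n x) \<le> b n \<and> l2 (\<lambda>x. v x - s n x)" for n
  proof -
    have *: "L2_set (\<lambda>x. cmod (v x - s n x)) F \<le> b n" if "finite F" for F
    proof -
      have t: "(\<lambda>m. L2_set (\<lambda>x. cmod (s m x - s n x)) F) \<longlonglongrightarrow> L2_set (\<lambda>x. cmod (v x - s n x)) F"
        unfolding L2_set_def by (intro tendsto_intros lim)
      show ?thesis
      proof (rule tendsto_upperbound[OF t])
        show "\<forall>\<^sub>F m in sequentially. L2_set (\<lambda>x. cmod (s m x - s n x)) F \<le> b n"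
          unfolding eventually_sequentially
        proof (intro exI allI impI)
          fix m assume "m \<ge> n"
          then show "L2_set (\<lambda>x. cmod (s m x - s n x)) F \<le> b n"
            using L2_le_nrm[OF l2_diff(1)[OF l2s l2s] that, of m n] C[of n m] by linarith
        qed
      qed simp
    qed
    show ?thesis using l2_boundI[OF *] by blast
  qed
  have l2v: "l2 v"
  proof -
    have "l2 (\<lambda>x. (v x - s 0 x) + s 0 x)" using l2_add(1) bound l2s by blast
    then show ?thesis by simp
  qed
  have vz: "v x = 0" if "x \<notin> A" for x
  proof -
    have "(\<lambda>n. s n x) = (\<lambda>n. 0)" using s that by (simp add: ell2_on_iff)
    then show ?thesis using lim[of x] LIMSEQ_unique by (metis tendsto_const)
  qed
  show ?thesis using l2v vz bound by (intro bexI[of _ v]) (auto simp: ell2_on_iff)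
qed



lemma V_l2: "u \<in> ell2_on A \<Longrightarrow> l2 u" by (simp add: ell2_on_iff)
lemma V_zero: "u \<in> ell2_on A \<Longrightarrow> x \<notin> A \<Longrightarrow> u x = 0" by (simp add: ell2_on_iff)
lemma V_add: "u \<in> ell2_on A \<Longrightarrow> v \<in> ell2_on A \<Longrightarrow> (\<lambda>x. u x + v x) \<in> ell2_on A"
  by (simp add: ell2_on_iff l2_add)
lemma V_diff: "u \<in> ell2_on A \<Longrightarrow> v \<in> ell2_on A \<Longrightarrow> (\<lambda>x. u x - v x) \<in> ell2_on A"
  by (simp add: ell2_on_iff l2_diff)
lemma V_scale: "u \<in> ell2_on A \<Longrightarrow> (\<lambda>x. c * u x) \<in> ell2_on A"
  by (simp add: ell2_on_iff l2_scale)
lemma V_uminus: "u \<in> ell2_on A \<Longrightarrow> (\<lambda>x. - u x) \<in> ell2_on A"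
  by (simp add: ell2_on_iff l2_uminus)
lemma V_0[simp]: "(\<lambda>x. 0) \<in> ell2_on A"
  by (simp add: ell2_on_iff)

definition lin_on :: "'a set \<Rightarrow> (('a \<Rightarrow> complex) \<Rightarrow> ('a \<Rightarrow> complex)) \<Rightarrow> bool" where
  "lin_on A B \<longleftrightarrow> (\<forall>u\<in>ell2_on A. B u \<in> ell2_on A) \<and>
     (\<forall>u\<in>ell2_on A. \<forall>v\<in>ell2_on A. B (\<lambda>x. u x + v x) = (\<lambda>x. B u x + B v x)) \<and>
     (\<forall>u\<in>ell2_on A. \<forall>c. B (\<lambda>x. c * u x) = (\<lambda>x. c * B u x))"

definition bnd_on :: "'a set \<Rightarrow> (('a \<Rightarrow> complex) \<Rightarrow> ('a \<Rightarrow> complex)) \<Rightarrow> real \<Rightarrow> bool" where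
  "bnd_on A B K \<longleftrightarrow> K \<ge> 0 \<and> (\<forall>u\<in>ell2_on A. ell2_norm (B u) \<le> K * ell2_norm u)"

definition herm_on :: "'a set \<Rightarrow> (('a \<Rightarrow> complex) \<Rightarrow> ('a \<Rightarrow> complex)) \<Rightarrow> bool" where
  "herm_on A B \<longleftrightarrow> (\<forall>u\<in>ell2_on A. \<forall>v\<in>ell2_on A. ell2_inner (B u) v = ell2_inner u (B v))"

lemma lin_V: "lin_on A B \<Longrightarrow> u \<in> ell2_on A \<Longrightarrow> B u \<in> ell2_on A"
  by (simp add: lin_on_def)
lemma lin_add: "lin_on A B \<Longrightarrow> u \<in> ell2_on A \<Longrightarrow> v \<in> ell2_on A \<Longrightarrow> B (\<lambda>x. u x + v x) = (\<lambda>x. B u x + B v x)"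
  by (simp add: lin_on_def)
lemma lin_scale: "lin_on A B \<Longrightarrow> u \<in> ell2_on A \<Longrightarrow> B (\<lambda>x. c * u x) = (\<lambda>x. c * B u x)"
  by (simp add: lin_on_def)
lemma lin_diff:
  assumes "lin_on A B" "u \<in> ell2_on A" "v \<in> ell2_on A"
  shows "B (\<lambda>x. u x - v x) = (\<lambda>x. B u x - B v x)"
proof -
  have e: "(\<lambda>x. u x - v x) = (\<lambda>x. u x + (-1) * v x)" by simp
  have "B (\<lambda>x. u x + (-1) * v x) = (\<lambda>x. B u x + B (\<lambda>x. (-1) * v x) x)"
    by (rule lin_add[OF assms(1,2) V_scale[OF assms(3)]])
  also have "\<dots> = (\<lambda>x. B u x - B v x)" unfolding lin_scale[OF assms(1,3), of "-1"] by simp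
  finally show ?thesis unfolding e .
qed
lemma bnd_le: "bnd_on A B K \<Longrightarrow> u \<in> ell2_on A \<Longrightarrow> ell2_norm (B u) \<le> K * ell2_norm u"
  by (simp add: bnd_on_def)
lemma bnd_K: "bnd_on A B K \<Longrightarrow> K \<ge> 0"
  by (simp add: bnd_on_def)

lemma nrm_diff_eq0:
  assumes "l2 u" "l2 v" "ell2_norm (\<lambda>x. u x - v x) \<le> 0"
  shows "u = v"
proof -
  have "ell2_norm (\<lambda>x. u x - v x) = 0" using assms(3) nrm_nonneg[of "\<lambda>x. u x - v x"] by linarith
  then have "(\<lambda>x. u x - v x) = (\<lambda>x. 0)" using nrm_eq0 l2_diff(1)[OF assms(1,2)] by blast
  then show ?thesis by (metis eq_iff_diff_eq_0 ext)
qed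

lemma approx_not_invertible:
  assumes lin: "lin_on A B"
    and ap: "\<And>e. e > 0 \<Longrightarrow> \<exists>u\<in>ell2_on A. ell2_norm u = 1 \<and> ell2_norm (B u) < e"
  shows "\<not> invertible_on A B"
proof
  assume "invertible_on A B"
  then obtain S C where S: "\<forall>u\<in>ell2_on A. S (B u) = u" and Sb: "\<forall>u\<in>ell2_on A. ell2_norm (S u) \<le> C * ell2_norm u"
    unfolding invertible_on_def bounded_on_def by blast
  have "1 / (\<bar>C\<bar> + 1) > 0" by (simp add: add_pos_nonneg)
  then obtain u where u: "u \<in> ell2_on A" "ell2_norm u = 1" "ell2_norm (B u) < 1 / (\<bar>C\<bar> + 1)"
    using ap by blast
  have "1 = ell2_norm (S (B u))" using S u by simp
  also have "\<dots> \<le> C * ell2_norm (B u)" using Sb lin_V[OF lin u(1)] by blast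
  also have "\<dots> \<le> \<bar>C\<bar> * ell2_norm (B u)" by (simp add: mult_right_mono nrm_nonneg)
  also have "\<dots> \<le> \<bar>C\<bar> * (1 / (\<bar>C\<bar> + 1))" using u(3) by (intro mult_left_mono) auto
  also have "\<dots> < 1" by (simp add: field_simps)
  finally show False by simp
qed

text \<open>G2: Cauchy-Schwarz for nonnegative hermitian operators\<close>
lemma psd_bound:
  assumes lin: "lin_on A B" and bnd: "bnd_on A B K" and herm: "herm_on A B"
    and psd: "\<And>u. u \<in> ell2_on A \<Longrightarrow> Re (ell2_inner (B u) u) \<ge> 0"
    and u: "u \<in> ell2_on A"
  shows "(ell2_norm (B u))^2 \<le> K * Re (ell2_inner (B u) u)"
proof -
  define w where "w = B u"
  have w: "w \<in> ell2_on A" using lin_V[OF lin u] w_def by simp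
  have Bw: "B w \<in> ell2_on A" using lin_V[OF lin w] .
  define N where "N = (ell2_norm w)^2"
  define P where "P = Re (ell2_inner (B u) u)"
  define R where "R = Re (ell2_inner (B w) w)"
  have K0: "K \<ge> 0" using bnd_K[OF bnd] .
  have R_le: "R \<le> K * N"
  proof -
    have "R \<le> cmod (ell2_inner (B w) w)" unfolding R_def by (rule complex_Re_le_cmod)
    also have "\<dots> \<le> ell2_norm (B w) * ell2_norm w" using ip_CS V_l2 w Bw by blast
    also have "\<dots> \<le> K * ell2_norm w * ell2_norm w"
      using bnd_le[OF bnd w] by (simp add: mult_right_mono nrm_nonneg)
    finally show ?thesis by (simp add: N_def power2_eq_square mult.assoc)
  qed
  have P0: "P \<ge> 0" using psd[OF u] P_def by simp
  have key: "0 \<le> P - 2 * s * N + s^2 * R" for s :: real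
  proof -
    define z where "z = (\<lambda>x. u x - complex_of_real s * w x)"
    have sw: "(\<lambda>x. complex_of_real s * w x) \<in> ell2_on A" using V_scale[OF w] .
    have z: "z \<in> ell2_on A" unfolding z_def using V_diff[OF u sw] .
    have Bz: "B z = (\<lambda>x. B u x - complex_of_real s * B w x)"
      unfolding z_def using lin_diff[OF lin u sw] lin_scale[OF lin w] w_def by simp
    have l: "l2 u" "l2 w" "l2 (B u)" "l2 (B w)" using u w Bw V_l2 w_def by auto
    have "ell2_inner (B z) z = ell2_inner (B u) u - complex_of_real s * ell2_inner (B u) w
        - complex_of_real s * ell2_inner (B w) u + (complex_of_real s)^2 * ell2_inner (B w) w"
      unfolding Bz unfolding z_def using l
      by (simp add: ip_diff_left ip_diff_right ip_scale_left ip_scale_right l2_scale l2_diff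
          algebra_simps power2_eq_square)
    moreover have "ell2_inner (B u) w = complex_of_real N"
      unfolding N_def w_def using ip_self l by (simp add: w_def)
    moreover have "ell2_inner (B w) u = complex_of_real N"
      using herm u w unfolding herm_on_def N_def w_def
      by (metis ip_self l(3) w_def)
    ultimately have "Re (ell2_inner (B z) z) = P - 2 * s * N + s^2 * R"
      unfolding P_def R_def by (simp add: power2_eq_square)
    then show ?thesis using psd[OF z] by simp
  qed
  show ?thesis
  proof (cases "N = 0")
    case True
    then show ?thesis using K0 P0 by (simp add: N_def w_def P_def)
  next
    case False
    have N0: "N > 0" using False by (simp add: N_def)
    have Kp: "K > 0"
    proof (rule ccontr)
      assume "\<not> K > 0" then have "K = 0" using K0 by simp
      then have "ell2_norm w \<le> 0" using bnd_le[OF bnd u] w_def by simp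
      then show False using N0 nrm_nonneg[of w] by (simp add: N_def)
    qed
    have "0 \<le> P - 2 * (1/K) * N + (1/K)^2 * R" by (rule key)
    also have "\<dots> \<le> P - 2 * (1/K) * N + (1/K)^2 * (K * N)"
      using R_le by (simp add: mult_left_mono)
    also have "\<dots> = P - N / K" using Kp by (simp add: field_simps power2_eq_square)
    finally have "N \<le> K * P" using Kp by (simp add: field_simps)
    then show ?thesis by (simp add: N_def w_def P_def)
  qed
qed



lemma coercive_lower:
  assumes lin: "lin_on A B" and c: "c > 0"
    and co: "\<And>u. u \<in> ell2_on A \<Longrightarrow> Re (ell2_inner (B u) u) \<ge> c * (ell2_norm u)^2"
    and u: "u \<in> ell2_on A"
  shows "c * ell2_norm u \<le> ell2_norm (B u)"
proof (cases "ell2_norm u = 0")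
  case True then show ?thesis by (simp add: nrm_nonneg)
next
  case False
  then have p: "ell2_norm u > 0" using nrm_nonneg[of u] by linarith
  have "c * ell2_norm u * ell2_norm u \<le> Re (ell2_inner (B u) u)" using co[OF u] by (simp add: power2_eq_square)
  also have "\<dots> \<le> cmod (ell2_inner (B u) u)" by (rule complex_Re_le_cmod)
  also have "\<dots> \<le> ell2_norm (B u) * ell2_norm u" using ip_CS V_l2 u lin_V[OF lin u] by blast
  finally show ?thesis using p by simp
qed

lemma contraction_step:
  assumes lin: "lin_on A B" and bnd: "bnd_on A B K" and c: "c > 0"
    and co: "\<And>u. u \<in> ell2_on A \<Longrightarrow> Re (ell2_inner (B u) u) \<ge> c * (ell2_norm u)^2"
    and u: "u \<in> ell2_on A"
  shows "ell2_norm (\<lambda>x. u x - complex_of_real (c / (K^2 + c^2)) * B u x)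
         \<le> sqrt (1 - c^2 / (K^2 + c^2)) * ell2_norm u"
proof -
  define K' where "K' = K^2 + c^2"
  have K'p: "K' > 0" using c by (simp add: K'_def add_nonneg_pos)
  define t where "t = c / K'"
  have tp: "t > 0" using c K'p by (simp add: t_def)
  have Bu: "B u \<in> ell2_on A" using lin_V[OF lin u] .
  have q0: "c^2 / K' \<le> 1" using K'p by (simp add: K'_def)
  have l: "l2 u" "l2 (B u)" using u Bu V_l2 by auto
  have e1: "(ell2_norm (\<lambda>x. u x - complex_of_real t * B u x))^2
      = (ell2_norm u)^2 - 2 * Re (ell2_inner (\<lambda>x. complex_of_real t * B u x) u)
        + (ell2_norm (\<lambda>x. complex_of_real t * B u x))^2"
    by (rule nrm_expand) (use l l2_scale in auto)
  have e2: "Re (ell2_inner (\<lambda>x. complex_of_real t * B u x) u) = t * Re (ell2_inner (B u) u)"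
    using ip_scale_left[OF l(2) l(1), of "complex_of_real t"] by simp
  have e3: "ell2_norm (\<lambda>x. complex_of_real t * B u x) = t * ell2_norm (B u)"
    using l2_scale(2)[OF l(2)] tp by simp
  have "(ell2_norm (\<lambda>x. u x - complex_of_real t * B u x))^2
        \<le> (ell2_norm u)^2 - 2 * t * (c * (ell2_norm u)^2) + (t * (K * ell2_norm u))^2"
  proof -
    have a: "2 * t * (c * (ell2_norm u)^2) \<le> 2 * t * Re (ell2_inner (B u) u)"
      using co[OF u] tp by simp
    have b: "(t * ell2_norm (B u))^2 \<le> (t * (K * ell2_norm u))^2"
      using bnd_le[OF bnd u] tp by (intro power_mono mult_left_mono) (auto simp: nrm_nonneg)
    show ?thesis unfolding e1 e2 e3 using a b by linarith
  qed
  also have "\<dots> \<le> (1 - c^2 / K') * (ell2_norm u)^2"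
  proof -
    have "K^2 \<le> K'" by (simp add: K'_def)
    then have "t^2 * K^2 \<le> t^2 * K'" by (simp add: mult_left_mono)
    then have "1 - 2 * t * c + t^2 * K^2 \<le> 1 - c^2 / K'"
      using K'p by (simp add: t_def field_simps power2_eq_square)
    then have "(1 - 2 * t * c + t^2 * K^2) * (ell2_norm u)^2 \<le> (1 - c^2 / K') * (ell2_norm u)^2"
      by (simp add: mult_right_mono)
    then show ?thesis by (simp add: algebra_simps power2_eq_square)
  qed
  also have "\<dots> = (sqrt (1 - c^2 / K') * ell2_norm u)^2"
  proof -
    have "c^2 \<le> K'" by (simp add: K'_def)
    then have "c^2 / K' \<le> 1" using K'p by simp
    then show ?thesis by (simp add: power_mult_distrib)
  qed
  finally have "(ell2_norm (\<lambda>x. u x - complex_of_real t * B u x))^2 \<le> (sqrt (1 - c^2 / K') * ell2_norm u)^2" .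
  then have "ell2_norm (\<lambda>x. u x - complex_of_real t * B u x) \<le> sqrt (1 - c^2 / K') * ell2_norm u"
    by (rule power2_le_imp_le) (use q0 in \<open>simp add: nrm_nonneg\<close>)
  then show ?thesis by (simp add: t_def K'_def)
qed



lemma coercive_solve:
  assumes lin: "lin_on A B" and bnd: "bnd_on A B K" and c: "c > 0"
    and co: "\<And>u. u \<in> ell2_on A \<Longrightarrow> Re (ell2_inner (B u) u) \<ge> c * (ell2_norm u)^2"
    and y: "y \<in> ell2_on A"
  shows "\<exists>v\<in>ell2_on A. B v = y"
proof -
  define K' where "K' = K^2 + c^2"
  have K'p: "K' > 0" using c by (simp add: K'_def add_nonneg_pos)
  define t where "t = c / K'"
  have tp: "t > 0" using c K'p by (simp add: t_def)
  define q where "q = sqrt (1 - c^2 / K')"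
  have q0: "q \<ge> 0" and q1: "q < 1"
  proof -
    have "c^2 / K' \<le> 1" using K'p by (simp add: K'_def)
    moreover have "c^2 / K' > 0" using c K'p by simp
    ultimately show "q \<ge> 0" "q < 1" by (auto simp: q_def)
  qed
  define Q where "Q u = (\<lambda>x. u x - complex_of_real t * B u x)" for u
  have QV: "Q u \<in> ell2_on A" if "u \<in> ell2_on A" for u
    unfolding Q_def by (intro V_diff V_scale lin_V[OF lin] that)
  have Qc: "ell2_norm (Q u) \<le> q * ell2_norm u" if "u \<in> ell2_on A" for u
    using contraction_step[OF lin bnd c co that] by (simp add: Q_def q_def t_def K'_def)
  have Qd: "Q (\<lambda>x. u x - w x) = (\<lambda>x. Q u x - Q w x)" if "u \<in> ell2_on A" "w \<in> ell2_on A" for u w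
    unfolding Q_def lin_diff[OF lin that] by (auto simp: algebra_simps)
  have ty: "(\<lambda>x. complex_of_real t * y x) \<in> ell2_on A" using V_scale[OF y] .
  define xs where "xs = rec_nat (\<lambda>x. 0) (\<lambda>n u. (\<lambda>x. Q u x + complex_of_real t * y x))"
  have xs0: "xs 0 = (\<lambda>x. 0)" and xsS: "xs (Suc n) = (\<lambda>x. Q (xs n) x + complex_of_real t * y x)" for n
    by (simp_all add: xs_def)
  have xsV: "xs n \<in> ell2_on A" for n
    by (induction n) (auto simp: xs0 xsS intro: V_add QV ty)
  define R where "R = ell2_norm (\<lambda>x. xs 1 x - xs 0 x)"
  have step: "(\<lambda>x. xs (Suc (Suc n)) x - xs (Suc n) x) = Q (\<lambda>x. xs (Suc n) x - xs n x)" for n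
    unfolding Qd[OF xsV xsV] by (simp add: xsS[of "Suc n"] xsS[of n])
  have dn: "ell2_norm (\<lambda>x. xs (Suc n) x - xs n x) \<le> q^n * R" for n
  proof (induction n)
    case 0 then show ?case by (simp add: R_def)
  next
    case (Suc n)
    have "ell2_norm (\<lambda>x. xs (Suc (Suc n)) x - xs (Suc n) x) \<le> q * ell2_norm (\<lambda>x. xs (Suc n) x - xs n x)"
      unfolding step by (rule Qc) (intro V_diff xsV)
    also have "\<dots> \<le> q * (q^n * R)" using Suc q0 by (simp add: mult_left_mono)
    finally show ?case by simp
  qed
  have R0: "R \<ge> 0" by (simp add: R_def nrm_nonneg)
  have dist: "ell2_norm (\<lambda>x. xs m x - xs n x) \<le> R * (q^n - q^m) / (1 - q)" if "n \<le> m" for n m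
    using that
  proof (induction m rule: dec_induct)
    case base then show ?case by simp
  next
    case (step m)
    have "ell2_norm (\<lambda>x. xs (Suc m) x - xs n x)
        \<le> ell2_norm (\<lambda>x. xs (Suc m) x - xs m x) + ell2_norm (\<lambda>x. xs m x - xs n x)"
      by (rule nrm_tri3) (use xsV V_l2 in auto)
    also have "\<dots> \<le> q^m * R + R * (q^n - q^m) / (1 - q)" using dn step.IH by (intro add_mono)
    also have "\<dots> = R * (q^n - q^Suc m) / (1 - q)" using q1 by (simp add: field_simps)
    finally show ?case .
  qed
  define b where "b n = R * q^n / (1 - q)" for n
  have distb: "ell2_norm (\<lambda>x. xs m x - xs n x) \<le> b n" if "n \<le> m" for n m
  proof -
    have "R * (q^n - q^m) / (1 - q) \<le> R * q^n / (1 - q)"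
      using q0 q1 R0 by (intro divide_right_mono mult_left_mono) auto
    then show ?thesis using dist[OF that] by (simp add: b_def)
  qed
  have b0: "b \<longlonglongrightarrow> 0"
  proof -
    have "(\<lambda>n. R * q^n / (1 - q)) \<longlonglongrightarrow> R * 0 / (1 - q)"
      by (intro tendsto_intros LIMSEQ_power_zero) (use q0 q1 in auto)
    then show ?thesis by (simp add: b_def[abs_def])
  qed
  obtain v where v: "v \<in> ell2_on A" and vb: "\<And>n. ell2_norm (\<lambda>x. v x - xs n x) \<le> b n"
    using ell2_complete[OF xsV b0 distb] by blast
  define fv where "fv = (\<lambda>x. Q v x + complex_of_real t * y x)"
  have fvV: "fv \<in> ell2_on A" unfolding fv_def by (intro V_add QV v ty)
  have "ell2_norm (\<lambda>x. fv x - v x) \<le> q * b n + b (Suc n)" for n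
  proof -
    have "(\<lambda>x. fv x - xs (Suc n) x) = Q (\<lambda>x. v x - xs n x)"
      unfolding Qd[OF v xsV] by (simp add: fv_def xsS)
    then have a: "ell2_norm (\<lambda>x. fv x - xs (Suc n) x) \<le> q * b n"
      using Qc[OF V_diff[OF v xsV]] vb[of n] q0 by (metis mult_left_mono order_trans)
    have "ell2_norm (\<lambda>x. fv x - v x)
        \<le> ell2_norm (\<lambda>x. fv x - xs (Suc n) x) + ell2_norm (\<lambda>x. xs (Suc n) x - v x)"
      by (rule nrm_tri3) (use xsV V_l2 v fvV in auto)
    then show ?thesis using a vb[of "Suc n"] nrm_sym[of "xs (Suc n)" v] by linarith
  qed
  moreover have "(\<lambda>n. q * b n + b (Suc n)) \<longlonglongrightarrow> q * 0 + 0"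
    by (intro tendsto_intros b0 LIMSEQ_Suc)
  then have "(\<lambda>n. q * b n + b (Suc n)) \<longlonglongrightarrow> 0" by simp
  ultimately have "ell2_norm (\<lambda>x. fv x - v x) \<le> 0"
    using LIMSEQ_le_const[of "\<lambda>n. q * b n + b (Suc n)" 0 "ell2_norm (\<lambda>x. fv x - v x)"] by blast
  then have "fv = v" using nrm_diff_eq0 V_l2 fvV v by blast
  then have e: "v x - complex_of_real t * B v x + complex_of_real t * y x = v x" for x
  proof -
    have "fv x = v x" using \<open>fv = v\<close> by simp
    then show ?thesis by (simp only: fv_def Q_def)
  qed
  have "complex_of_real t * (y x - B v x) = 0" for x
  proof -
    have "complex_of_real t * (y x - B v x) = (v x - complex_of_real t * B v x + complex_of_real t * y x) - v x"
      by (simp add: algebra_simps)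
    then show ?thesis using e[of x] by simp
  qed
  then have "B v = y" using tp by (auto intro!: ext)
  then show ?thesis using v by blast
qed

lemma coercive_invertible:
  assumes lin: "lin_on A B" and bnd: "bnd_on A B K" and c: "c > 0"
    and co: "\<And>u. u \<in> ell2_on A \<Longrightarrow> Re (ell2_inner (B u) u) \<ge> c * (ell2_norm u)^2"
  shows "invertible_on A B"
proof -
  define S where "S y = (SOME v. v \<in> ell2_on A \<and> B v = y)" for y
  have S: "S y \<in> ell2_on A \<and> B (S y) = y" if "y \<in> ell2_on A" for y
  proof -
    have "\<exists>v. v \<in> ell2_on A \<and> B v = y" using coercive_solve[of A B K c y] lin bnd c co that by blast
    then show ?thesis unfolding S_def by (rule someI_ex)
  qed
  have low: "c * ell2_norm u \<le> ell2_norm (B u)" if "u \<in> ell2_on A" for u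
    by (rule coercive_lower[OF lin c co that])
  have bS: "bounded_on A S"
    unfolding bounded_on_def
  proof (intro conjI ballI exI)
    fix u assume u: "u \<in> ell2_on A"
    show "S u \<in> ell2_on A" using S[OF u] by blast
    have "c * ell2_norm (S u) \<le> ell2_norm u" using low[of "S u"] S[OF u] by simp
    then show "ell2_norm (S u) \<le> (1 / c) * ell2_norm u" using c by (simp add: field_simps)
  qed
  have "S (B u) = u" if u: "u \<in> ell2_on A" for u
  proof -
    have Bu: "B u \<in> ell2_on A" using lin_V[OF lin u] .
    have "B (\<lambda>x. S (B u) x - u x) = (\<lambda>x. 0)"
      using lin_diff[OF lin conjunct1[OF S[OF Bu]] u] S[OF Bu] by simp
    then have "c * ell2_norm (\<lambda>x. S (B u) x - u x) \<le> 0"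
      using low[OF V_diff[OF conjunct1[OF S[OF Bu]] u]] by simp
    then have "ell2_norm (\<lambda>x. S (B u) x - u x) \<le> 0" using c by (simp add: mult_le_0_iff)
    then show ?thesis using nrm_diff_eq0 V_l2 S[OF Bu] u by blast
  qed
  then show ?thesis unfolding invertible_on_def using bS S by blast
qed



definition prj :: "'a set \<Rightarrow> ('a \<Rightarrow> complex) \<Rightarrow> 'a \<Rightarrow> complex" where
  "prj A w = (\<lambda>x. if x \<in> A then w x else 0)"

lemma prj_l2:
  assumes "l2 w"
  shows "prj A w \<in> ell2_on A" "ell2_norm (prj A w) \<le> ell2_norm w"
proof -
  have *: "L2_set (\<lambda>x. cmod (prj A w x)) F \<le> ell2_norm w" if "finite F" for F
  proof -
    have "L2_set (\<lambda>x. cmod (prj A w x)) F \<le> L2_set (\<lambda>x. cmod (w x)) F"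
      by (rule L2_set_mono) (auto simp: prj_def)
    also have "\<dots> \<le> ell2_norm w" by (rule L2_le_nrm[OF assms that])
    finally show ?thesis .
  qed
  show "prj A w \<in> ell2_on A" using l2_boundI(1)[OF *] by (auto simp: ell2_on_iff prj_def)
  show "ell2_norm (prj A w) \<le> ell2_norm w" by (rule l2_boundI(2)[OF *])
qed

lemma prj_id: "u \<in> ell2_on A \<Longrightarrow> prj A u = u"
  by (auto simp: prj_def ell2_on_iff)

lemma ip_prj: "ell2_inner (prj A w) v = ell2_inner w (prj A v)"
  unfolding ell2_inner_def prj_def by (rule infsum_cong) auto

lemma V_mono: "A \<subseteq> A' \<Longrightarrow> u \<in> ell2_on A \<Longrightarrow> u \<in> ell2_on A'"
  by (auto simp: ell2_on_iff)

lemma invertible_cong1: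
  assumes e: "\<And>u. u \<in> ell2_on A \<Longrightarrow> B u = B' u" and inv: "invertible_on A B"
  shows "invertible_on A B'"
proof -
  obtain S where S: "bounded_on A S" "\<forall>u\<in>ell2_on A. S (B u) = u \<and> B (S u) = u"
    using inv unfolding invertible_on_def by blast
  have SV: "\<forall>u\<in>ell2_on A. S u \<in> ell2_on A" using S(1) by (simp add: bounded_on_def)
  have "\<forall>u\<in>ell2_on A. S (B' u) = u \<and> B' (S u) = u"
    using S(2) SV e by auto
  then show ?thesis unfolding invertible_on_def using S(1) by blast
qed

lemma invertible_cong:
  assumes "\<And>u. u \<in> ell2_on A \<Longrightarrow> B u = B' u"
  shows "invertible_on A B \<longleftrightarrow> invertible_on A B'"
  using invertible_cong1[of A B B'] invertible_cong1[of A B' B] assms by metis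

lemma fredholm_cong1:
  assumes e: "\<And>u. u \<in> ell2_on A \<Longrightarrow> B u = B' u" and fr: "fredholm_on A B"
  shows "fredholm_on A B'"
proof -
  obtain F where F: "finite F" "F \<subseteq> ell2_on A"
      "\<forall>u\<in>ell2_on A. B u = (\<lambda>_. 0) \<longrightarrow> (\<exists>c. u = lincomb F c)"
    using fr unfolding fredholm_on_def by blast
  obtain G where G: "finite G" "G \<subseteq> ell2_on A"
      "\<forall>v\<in>ell2_on A. \<exists>u\<in>ell2_on A. \<exists>c. v = (\<lambda>x. B u x + lincomb G c x)"
    using fr unfolding fredholm_on_def by blast
  have "\<forall>u\<in>ell2_on A. B' u = (\<lambda>_. 0) \<longrightarrow> (\<exists>c. u = lincomb F c)" using F(3) e by auto
  moreover have "\<forall>v\<in>ell2_on A. \<exists>u\<in>ell2_on A. \<exists>c. v = (\<lambda>x. B' u x + lincomb G c x)"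
  proof
    fix v assume "v \<in> ell2_on A"
    then obtain u c where "u \<in> ell2_on A" "v = (\<lambda>x. B u x + lincomb G c x)" using G(3) by blast
    then show "\<exists>u\<in>ell2_on A. \<exists>c. v = (\<lambda>x. B' u x + lincomb G c x)" using e by auto
  qed
  ultimately show ?thesis unfolding fredholm_on_def using F(1,2) G(1,2) by blast
qed

lemma fredholm_cong:
  assumes "\<And>u. u \<in> ell2_on A \<Longrightarrow> B u = B' u"
  shows "fredholm_on A B \<longleftrightarrow> fredholm_on A B'"
  using fredholm_cong1[of A B B'] fredholm_cong1[of A B' B] assms by metis

locale hop =
  fixes H :: "'a \<Rightarrow> 'a \<Rightarrow> complex"
  assumes bm: "bounded_matrix_on UNIV H"
    and sa: "self_adjoint_on UNIV (mat_op H UNIV)"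
begin

abbreviation T where "T \<equiv> mat_op H UNIV"

lemma T_eq: "T u = (\<lambda>x. infsum (\<lambda>y. H x y * u y) UNIV)"
  by (simp add: mat_op_def)

lemma row_summable: "(u::'a \<Rightarrow> complex) \<in> ell2_on UNIV \<Longrightarrow> (\<lambda>y. H x y * u y) summable_on UNIV"
  using bm by (simp add: bounded_matrix_on_def)

lemma T_lin: "lin_on UNIV T"
  unfolding lin_on_def
proof (intro conjI ballI allI)
  fix u :: "'a \<Rightarrow> complex" assume u: "u \<in> ell2_on UNIV"
  show "T u \<in> ell2_on UNIV" using bm u by (simp add: bounded_matrix_on_def bounded_on_def)
  fix c show "T (\<lambda>x. c * u x) = (\<lambda>x. c * T u x)"
    unfolding T_eq by (rule ext) (simp add: mult.left_commute infsum_cmult_right row_summable[OF u])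
next
  fix u v :: "'a \<Rightarrow> complex" assume u: "u \<in> ell2_on UNIV" and v: "v \<in> ell2_on UNIV"
  show "T (\<lambda>x. u x + v x) = (\<lambda>x. T u x + T v x)"
    unfolding T_eq by (rule ext) (simp add: distrib_left infsum_add row_summable[OF u] row_summable[OF v])
qed

definition Kp :: "real \<Rightarrow> bool" where "Kp C \<longleftrightarrow> (\<forall>u\<in>ell2_on UNIV. ell2_norm (T u) \<le> C * ell2_norm u)"

definition K where "K = max 0 (SOME C. Kp C)"

lemma T_bnd: "bnd_on UNIV T K"
proof -
  have "\<exists>C. Kp C"
    using bm by (simp add: bounded_matrix_on_def bounded_on_def Kp_def)
  then have C: "Kp (SOME C. Kp C)" by (rule someI_ex)
  define C0 where "C0 = (SOME C. Kp C)"
  have C0: "\<forall>u\<in>ell2_on UNIV. ell2_norm (T u) \<le> C0 * ell2_norm u" using C by (simp add: Kp_def C0_def)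
  show ?thesis unfolding bnd_on_def
  proof (intro conjI ballI)
    show "K \<ge> 0" by (simp add: K_def)
    fix u :: "'a \<Rightarrow> complex" assume u: "u \<in> ell2_on UNIV"
    have "C0 * ell2_norm u \<le> K * ell2_norm u"
      unfolding K_def C0_def[symmetric] by (rule mult_right_mono[OF max.cobounded2 nrm_nonneg])
    moreover have "ell2_norm (T u) \<le> C0 * ell2_norm u" using C0 u by blast
    ultimately show "ell2_norm (T u) \<le> K * ell2_norm u" by linarith
  qed
qed

lemma K0: "K \<ge> 0" using T_bnd bnd_K by blast

lemma T_herm: "(u::'a \<Rightarrow> complex) \<in> ell2_on UNIV \<Longrightarrow> v \<in> ell2_on UNIV \<Longrightarrow> ell2_inner (T u) v = ell2_inner u (T v)"
  using sa by (simp add: self_adjoint_on_def)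

lemma matop_A: "u \<in> ell2_on A \<Longrightarrow> mat_op H A u = prj A (T u)"
  unfolding mat_op_def prj_def
  by (rule ext) (auto intro!: infsum_cong_neutral simp: ell2_on_iff)

definition sh :: "'a set \<Rightarrow> complex \<Rightarrow> ('a \<Rightarrow> complex) \<Rightarrow> 'a \<Rightarrow> complex" where
  "sh A z u = (\<lambda>x. prj A (T u) x - z * u x)"

lemma shift_eq: "u \<in> ell2_on A \<Longrightarrow> shift_op (mat_op H A) z u = sh A z u"
  by (simp add: shift_op_def sh_def matop_A)

lemma shift_eq_UNIV: "shift_op T z u = sh UNIV z u"
  by (simp add: shift_op_def sh_def prj_def)

lemma TV: "u \<in> ell2_on A \<Longrightarrow> T u \<in> ell2_on UNIV"
  by (rule lin_V[OF T_lin V_mono[OF subset_UNIV]])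

lemma sh_lin: "lin_on A (sh A z)"
  unfolding lin_on_def
proof (intro conjI ballI allI)
  fix u assume u: "u \<in> ell2_on A"
  have uU: "u \<in> ell2_on UNIV" using V_mono[OF subset_UNIV u] .
  show "sh A z u \<in> ell2_on A" unfolding sh_def
    by (intro V_diff V_scale u prj_l2(1) V_l2[OF TV[OF u]])
  fix c show "sh A z (\<lambda>x. c * u x) = (\<lambda>x. c * sh A z u x)"
    unfolding sh_def lin_scale[OF T_lin uU] by (auto simp: prj_def algebra_simps)
next
  fix u v assume u: "u \<in> ell2_on A" and v: "v \<in> ell2_on A"
  have uU: "u \<in> ell2_on UNIV" "v \<in> ell2_on UNIV" using V_mono[OF subset_UNIV u] V_mono[OF subset_UNIV v] by auto
  show "sh A z (\<lambda>x. u x + v x) = (\<lambda>x. sh A z u x + sh A z v x)"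
    unfolding sh_def lin_add[OF T_lin uU] by (auto simp: prj_def algebra_simps)
qed

lemma sh_bnd: "bnd_on A (sh A z) (K + cmod z)"
  unfolding bnd_on_def
proof (intro conjI ballI)
  show "K + cmod z \<ge> 0" using K0 by simp
  fix u assume u: "u \<in> ell2_on A"
  have uU: "u \<in> ell2_on UNIV" using V_mono[OF subset_UNIV u] .
  have l: "l2 (prj A (T u))" "l2 (\<lambda>x. z * u x)" "l2 u" "l2 (T u)"
    using prj_l2(1) V_l2 TV[OF u] u l2_scale by blast+
  have "ell2_norm (sh A z u) \<le> ell2_norm (prj A (T u)) + ell2_norm (\<lambda>x. z * u x)"
    unfolding sh_def by (rule l2_diff(2)[OF l(1,2)])
  also have "\<dots> \<le> K * ell2_norm u + cmod z * ell2_norm u"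
    using prj_l2(2)[OF l(4), of A] bnd_le[OF T_bnd uU] l2_scale(2)[OF l(3), of z] by linarith
  finally show "ell2_norm (sh A z u) \<le> (K + cmod z) * ell2_norm u" by (simp add: algebra_simps)
qed

lemma ip_TA: "u \<in> ell2_on A \<Longrightarrow> ell2_inner (prj A (T u)) u = ell2_inner (T u) u"
  by (simp add: ip_prj prj_id)

lemma sh_herm: "herm_on A (sh A (complex_of_real r))"
  unfolding herm_on_def
proof (intro ballI)
  fix u v assume u: "u \<in> ell2_on A" and v: "v \<in> ell2_on A"
  have uU: "u \<in> ell2_on UNIV" "v \<in> ell2_on UNIV" using V_mono[OF subset_UNIV u] V_mono[OF subset_UNIV v] by auto
  have l: "l2 (prj A (T u))" "l2 (prj A (T v))" "l2 u" "l2 v"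
    using prj_l2(1) V_l2 TV u v by blast+
  have a: "ell2_inner (prj A (T u)) v = ell2_inner u (prj A (T v))"
    using ip_prj[of A "T u" v] ip_prj[of A u "T v"] prj_id[OF u] prj_id[OF v] T_herm[OF uU] by simp
  show "ell2_inner (sh A (complex_of_real r) u) v = ell2_inner u (sh A (complex_of_real r) v)"
    unfolding sh_def using l a by (simp add: ip_diff_left ip_diff_right ip_scale_left ip_scale_right l2_scale)
qed

definition qf :: "('a \<Rightarrow> complex) \<Rightarrow> real" where "qf u = Re (ell2_inner (T u) u)"

definition mA :: "'a set \<Rightarrow> real" where
  "mA A = Inf (qf ` {u \<in> ell2_on A. ell2_norm u = 1})"

definition dlt :: "'a \<Rightarrow> 'a \<Rightarrow> complex" where "dlt a = (\<lambda>x. if x = a then 1 else 0)"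

lemma dlt_V: "a \<in> A \<Longrightarrow> dlt a \<in> ell2_on A"
  unfolding ell2_on_iff dlt_def by (auto intro: l2_finite_support)

lemma dlt_nrm: "ell2_norm (dlt a) = 1"
proof -
  have "infsum (\<lambda>x. (cmod (dlt a x))^2) UNIV = infsum (\<lambda>x. (cmod (dlt a x))^2) {a}"
    by (rule infsum_cong_neutral) (auto simp: dlt_def)
  then show ?thesis by (simp add: ell2_norm_def dlt_def)
qed

lemma qf_bound: "u \<in> ell2_on A \<Longrightarrow> \<bar>qf u\<bar> \<le> K * (ell2_norm u)^2"
proof -
  assume u: "u \<in> ell2_on A"
  have uU: "u \<in> ell2_on UNIV" using V_mono[OF subset_UNIV u] .
  have "\<bar>qf u\<bar> \<le> cmod (ell2_inner (T u) u)" unfolding qf_def by (rule abs_Re_le_cmod)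
  also have "\<dots> \<le> ell2_norm (T u) * ell2_norm u" using ip_CS V_l2 TV[OF u] u by blast
  also have "\<dots> \<le> K * ell2_norm u * ell2_norm u"
    using bnd_le[OF T_bnd uU] by (simp add: mult_right_mono nrm_nonneg)
  finally show ?thesis by (simp add: power2_eq_square mult.assoc)
qed

lemma qf_scale: "u \<in> ell2_on A \<Longrightarrow> qf (\<lambda>x. complex_of_real r * u x) = r^2 * qf u"
proof -
  assume u: "u \<in> ell2_on A"
  have uU: "u \<in> ell2_on UNIV" using V_mono[OF subset_UNIV u] .
  have l: "l2 u" "l2 (T u)" using V_l2 TV u by blast+
  show ?thesis unfolding qf_def lin_scale[OF T_lin uU] using l
    by (simp add: ip_scale_left ip_scale_right l2_scale power2_eq_square)
qed

lemma mA_set_ne: "(A::'a set) \<noteq> {} \<Longrightarrow> {u \<in> ell2_on A. ell2_norm u = 1} \<noteq> {}"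
proof -
  assume "A \<noteq> {}"
  then obtain a where a: "a \<in> A" by blast
  then have "dlt a \<in> {u \<in> ell2_on A. ell2_norm u = 1}" using dlt_V[OF a] dlt_nrm by simp
  then show ?thesis by blast
qed

lemma mA_bdd: "bdd_below (qf ` {u \<in> ell2_on A. ell2_norm u = 1})"
proof (rule bdd_belowI2)
  fix u assume "u \<in> {u \<in> ell2_on A. ell2_norm u = 1}"
  then show "- K \<le> qf u" using qf_bound[of u A] by auto
qed

lemma mA_lower: "u \<in> ell2_on A \<Longrightarrow> ell2_norm u = 1 \<Longrightarrow> mA A \<le> qf u"
  unfolding mA_def by (rule cInf_lower) (auto intro: mA_bdd)

lemma mA_ge: "A \<noteq> {} \<Longrightarrow> mA A \<ge> - K"
proof -
  assume A: "A \<noteq> {}"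
  show ?thesis unfolding mA_def
  proof (rule cInf_greatest)
    show "qf ` {u \<in> ell2_on A. ell2_norm u = 1} \<noteq> {}" using mA_set_ne[OF A] by blast
    fix y assume "y \<in> qf ` {u \<in> ell2_on A. ell2_norm u = 1}"
    then obtain u where u: "u \<in> ell2_on A" "ell2_norm u = 1" "y = qf u" by blast
    then show "- K \<le> y" using qf_bound[OF u(1)] by auto
  qed
qed

lemma mA_le: "A \<noteq> {} \<Longrightarrow> mA A \<le> K"
proof -
  assume "A \<noteq> {}"
  then obtain a where a: "a \<in> A" by blast
  have "mA A \<le> qf (dlt a)" by (rule mA_lower[OF dlt_V[OF a] dlt_nrm])
  also have "\<dots> \<le> K" using qf_bound[OF dlt_V[OF a]] dlt_nrm by simp
  finally show ?thesis .
qed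

lemma mA_approx: "A \<noteq> {} \<Longrightarrow> e > 0 \<Longrightarrow> \<exists>u\<in>ell2_on A. ell2_norm u = 1 \<and> qf u < mA A + e"
proof -
  assume A: "A \<noteq> {}" and e: "e > 0"
  have ne: "qf ` {u \<in> ell2_on A. ell2_norm u = 1} \<noteq> {}" using mA_set_ne[OF A] by blast
  have "\<exists>y\<in>qf ` {u \<in> ell2_on A. ell2_norm u = 1}. y < mA A + e"
    using cInf_lessD[OF ne, of "mA A + e"] e unfolding mA_def by simp
  then show ?thesis by auto
qed

lemma mA_quad: "u \<in> ell2_on A \<Longrightarrow> qf u \<ge> mA A * (ell2_norm u)^2"
proof (cases "ell2_norm u = 0")
  case True
  assume u: "u \<in> ell2_on A"
  then have "u = (\<lambda>x. 0)" using nrm_eq0 V_l2 True by blast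
  then have "qf u = 0" using lin_scale[OF T_lin V_0, of 0] by (simp add: qf_def ell2_inner_def)
  then show ?thesis using True by simp
next
  case False
  assume u: "u \<in> ell2_on A"
  define n where "n = ell2_norm u"
  have np: "n > 0" using False nrm_nonneg[of u] n_def by linarith
  define w where "w = (\<lambda>x. complex_of_real (1/n) * u x)"
  have w: "w \<in> ell2_on A" unfolding w_def using V_scale[OF u] .
  have "ell2_norm w = cmod (complex_of_real (1/n)) * ell2_norm u"
    unfolding w_def by (rule l2_scale(2)[OF V_l2[OF u]])
  then have wn: "ell2_norm w = 1" using np n_def by (simp add: norm_divide)
  have "mA A \<le> qf w" by (rule mA_lower[OF w wn])
  also have "\<dots> = qf u / n^2" unfolding w_def qf_scale[OF u] by (simp add: power2_eq_square)
  finally show ?thesis using np by (simp add: n_def field_simps)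
qed

end



context hop
begin

lemma Re_sh: "u \<in> ell2_on A \<Longrightarrow> Re (ell2_inner (sh A (complex_of_real t) u) u) = qf u - t * (ell2_norm u)^2"
proof -
  assume u: "u \<in> ell2_on A"
  have l: "l2 (prj A (T u))" "l2 u" using prj_l2(1) V_l2 TV[OF u] u by blast+
  have "ell2_inner (sh A (complex_of_real t) u) u
      = ell2_inner (prj A (T u)) u - complex_of_real t * ell2_inner u u"
    unfolding sh_def using l by (simp add: ip_diff_left ip_scale_left l2_scale)
  then show ?thesis using ip_TA[OF u] ip_self[OF l(2)] by (simp add: qf_def)
qed

lemma spec_iff: "t \<in> real_points (spectrum_on A (mat_op H A)) \<longleftrightarrow> \<not> invertible_on A (sh A (complex_of_real t))"
  unfolding real_points_def spectrum_on_def using invertible_cong[of A "shift_op (mat_op H A) (complex_of_real t)" "sh A (complex_of_real t)"] shift_eq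
  by auto

lemma below_not_spec:
  assumes "t < mA A"
  shows "invertible_on A (sh A (complex_of_real t))"
proof (rule coercive_invertible[OF sh_lin sh_bnd])
  show "mA A - t > 0" using assms by simp
  fix u assume u: "u \<in> ell2_on A"
  show "(mA A - t) * (ell2_norm u)^2 \<le> Re (ell2_inner (sh A (complex_of_real t) u) u)"
    unfolding Re_sh[OF u] using mA_quad[OF u] by (simp add: algebra_simps)
qed

lemma min_spec:
  assumes A: "A \<noteq> {}"
  shows "\<not> invertible_on A (sh A (complex_of_real (mA A)))"
proof (rule approx_not_invertible[OF sh_lin])
  fix e :: real assume e: "e > 0"
  define m where "m = mA A"
  define K' where "K' = K + cmod (complex_of_real m)"
  have K'0: "K' \<ge> 0" using K0 by (simp add: K'_def)
  have psd: "(ell2_norm (sh A (complex_of_real m) u))^2 \<le> K' * (qf u - m * (ell2_norm u)^2)"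
    if u: "u \<in> ell2_on A" for u
  proof -
    have pos: "Re (ell2_inner (sh A (complex_of_real m) w) w) \<ge> 0" if w: "w \<in> ell2_on A" for w
      unfolding Re_sh[OF w] using mA_quad[OF w] m_def by simp
    have "(ell2_norm (sh A (complex_of_real m) u))^2 \<le> K' * Re (ell2_inner (sh A (complex_of_real m) u) u)"
      unfolding K'_def by (rule psd_bound[OF sh_lin sh_bnd sh_herm pos u])
    then show ?thesis unfolding Re_sh[OF u] .
  qed
  have "e^2 / (K' + 1) > 0" using e K'0 by simp
  then obtain u where u: "u \<in> ell2_on A" "ell2_norm u = 1" "qf u < m + e^2 / (K' + 1)"
    using mA_approx[OF A] m_def by blast
  have "(ell2_norm (sh A (complex_of_real m) u))^2 \<le> K' * (qf u - m)" using psd[OF u(1)] u(2) by simp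
  also have "\<dots> \<le> K' * (e^2 / (K' + 1))" using u(3) K'0 by (intro mult_left_mono) auto
  also have "\<dots> < e^2" using K'0 e by (simp add: field_simps)
  finally have "(ell2_norm (sh A (complex_of_real m) u))^2 < e^2" .
  then have "ell2_norm (sh A (complex_of_real m) u) < e" using e by (simp add: power_less_imp_less_base)
  then show "\<exists>u\<in>ell2_on A. ell2_norm u = 1 \<and> ell2_norm (sh A (complex_of_real (mA A)) u) < e"
    using u m_def by blast
qed

lemma spec_inf:
  assumes A: "A \<noteq> {}"
  shows "Inf (real_points (spectrum_on A (mat_op H A))) = mA A"
proof (rule cInf_eq_minimum)
  show "mA A \<in> real_points (spectrum_on A (mat_op H A))" using spec_iff min_spec[OF A] by blast
  fix t assume "t \<in> real_points (spectrum_on A (mat_op H A))"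
  then show "mA A \<le> t" using spec_iff below_not_spec by (meson not_le)
qed

end



lemma V_sum: "finite I \<Longrightarrow> (\<And>i. i \<in> I \<Longrightarrow> f i \<in> ell2_on A) \<Longrightarrow> (\<lambda>y. \<Sum>i\<in>I. c i * f i y) \<in> ell2_on A"
proof (induction I rule: finite_induct)
  case empty then show ?case by simp
next
  case (insert a I)
  have "(\<lambda>y. c a * f a y + (\<Sum>i\<in>I. c i * f i y)) \<in> ell2_on A"
    using insert by (intro V_add V_scale) auto
  then show ?case using insert by simp
qed

lemma lin_zero: "lin_on A B \<Longrightarrow> B (\<lambda>y. 0) = (\<lambda>y. 0)"
  using lin_scale[of A B "\<lambda>y. 0" 0] by simp

lemma lin_sum:
  assumes lin: "lin_on A B"
  shows "finite I \<Longrightarrow> (\<And>i. i \<in> I \<Longrightarrow> f i \<in> ell2_on A) \<Longrightarrow>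
    B (\<lambda>y. \<Sum>i\<in>I. c i * f i y) = (\<lambda>y. \<Sum>i\<in>I. c i * B (f i) y)"
proof (induction I rule: finite_induct)
  case empty then show ?case using lin_zero[OF lin] by simp
next
  case (insert a I)
  have s: "(\<lambda>y. \<Sum>i\<in>I. c i * f i y) \<in> ell2_on A" using insert by (intro V_sum) auto
  have fa: "f a \<in> ell2_on A" using insert by auto
  have "B (\<lambda>y. c a * f a y + (\<Sum>i\<in>I. c i * f i y)) = (\<lambda>y. B (\<lambda>y. c a * f a y) y + B (\<lambda>y. \<Sum>i\<in>I. c i * f i y) y)"
    by (rule lin_add[OF lin V_scale[OF fa] s])
  also have "\<dots> = (\<lambda>y. c a * B (f a) y + (\<Sum>i\<in>I. c i * B (f i) y))"
    using insert lin_scale[OF lin fa] by simp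
  finally show ?case using insert by simp
qed

lemma lincomb_reindex:
  assumes F: "finite F0" and g: "\<And>x z. x \<in> F0 \<Longrightarrow> z \<in> F0 \<Longrightarrow> g x z = (if z = x then 1 else 0)"
  shows "lincomb (g ` F0) (\<lambda>f. \<Sum>z\<in>F0. f z * u z) = (\<lambda>y. \<Sum>x\<in>F0. u x * g x y)"
proof -
  have inj: "inj_on g F0"
  proof (rule inj_onI)
    fix x x' assume "x \<in> F0" "x' \<in> F0" "g x = g x'"
    then have "g x x = g x' x" by simp
    then show "x = x'" using g \<open>x \<in> F0\<close> \<open>x' \<in> F0\<close> by (auto split: if_splits)
  qed
  have c: "(\<Sum>z\<in>F0. g x z * u z) = u x" if x: "x \<in> F0" for x
  proof -
    have "(\<Sum>z\<in>F0. g x z * u z) = (\<Sum>z\<in>F0. if z = x then u z else 0)"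
      by (rule sum.cong) (use g x in auto)
    also have "\<dots> = u x" using F x by simp
    finally show ?thesis .
  qed
  show ?thesis unfolding lincomb_def
    by (rule ext) (simp add: sum.reindex[OF inj] c)
qed

lemma delta_sum:
  fixes r :: "'a \<Rightarrow> complex"
  assumes F: "finite F0" and r: "\<And>y. y \<notin> F0 \<Longrightarrow> r y = 0"
  shows "(\<lambda>y. \<Sum>x\<in>F0. r x * (if y = x then 1 else 0)) = r"
proof
  fix y
  have "(\<Sum>x\<in>F0. r x * (if y = x then 1 else 0)) = (\<Sum>x\<in>F0. if x = y then r x else 0)"
    by (rule sum.cong) auto
  also have "\<dots> = r y" using F r by (cases "y \<in> F0") auto
  finally show "(\<Sum>x\<in>F0. r x * (if y = x then 1 else 0)) = r y" .
qed

context hop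
begin

lemma sh_UNIV: "sh UNIV z u = (\<lambda>x. T u x - z * u x)"
  by (simp add: sh_def prj_def)

lemma below_ess_fredholm:
  assumes F: "finite (- A)" and t: "t < mA A"
  shows "fredholm_on UNIV (sh UNIV (complex_of_real t))"
proof -
  define F0 where "F0 = - A"
  have F0: "finite F0" using F F0_def by simp
  define BA where "BA = sh A (complex_of_real t)"
  define B where "B = sh UNIV (complex_of_real t)"
  have c: "mA A - t > 0" using t by simp
  have co: "(mA A - t) * (ell2_norm u)^2 \<le> Re (ell2_inner (BA u) u)" if u: "u \<in> ell2_on A" for u
    unfolding BA_def Re_sh[OF u] using mA_quad[OF u] by (simp add: algebra_simps)
  have low: "(mA A - t) * ell2_norm u \<le> ell2_norm (BA u)" if u: "u \<in> ell2_on A" for u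
    by (rule coercive_lower[OF _ c co u]) (simp add: BA_def sh_lin)
  have "invertible_on A BA" unfolding BA_def by (rule below_not_spec[OF t])
  then obtain S where Sb: "bounded_on A S" and S: "\<forall>u\<in>ell2_on A. S (BA u) = u \<and> BA (S u) = u"
    unfolding invertible_on_def by blast
  have SV: "S u \<in> ell2_on A" if "u \<in> ell2_on A" for u using Sb that by (simp add: bounded_on_def)
  have VU: "u \<in> ell2_on UNIV" if "u \<in> ell2_on A" for u using V_mono[OF subset_UNIV that] .
  have linB: "lin_on UNIV B" unfolding B_def by (rule sh_lin)
  have BA_B: "BA u = prj A (B u)" if u: "u \<in> ell2_on A" for u
    unfolding BA_def B_def sh_def prj_def using V_zero[OF u] by (auto intro!: ext)
  have dltV: "dlt x \<in> ell2_on UNIV" for x by (rule dlt_V) simp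
  define y where "y x = prj A (T (dlt x))" for x
  have yV: "y x \<in> ell2_on A" for x unfolding y_def by (rule prj_l2(1)) (rule V_l2[OF TV[OF dltV]])
  define g where "g x = (\<lambda>z. dlt x z - S (y x) z)" for x
  have gV: "g x \<in> ell2_on UNIV" for x unfolding g_def by (intro V_diff dltV VU SV yV)
  have gF: "g x z = (if z = x then 1 else 0)" if "z \<in> F0" for x z
    using V_zero[OF SV[OF yV], of z x] that by (simp add: g_def dlt_def F0_def)
  have PBg: "prj A (B (g x)) = (\<lambda>z. 0)" if x: "x \<in> F0" for x
  proof -
    have h1: "B (g x) = (\<lambda>z. B (dlt x) z - B (S (y x)) z)"
      unfolding g_def by (rule lin_diff[OF linB dltV VU[OF SV[OF yV]]])
    have h2: "prj A (B (dlt x)) = y x"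
      using x unfolding B_def sh_def y_def prj_def F0_def dlt_def by (auto intro!: ext)
    have h3: "prj A (B (S (y x))) = y x"
      using BA_B[OF SV[OF yV]] S yV by metis
    show ?thesis
    proof
      fix z
      have "prj A (B (g x)) z = prj A (B (dlt x)) z - prj A (B (S (y x))) z" using h1 by (simp add: prj_def)
      then show "prj A (B (g x)) z = 0" using h2 h3 by simp
    qed
  qed
  have Bg0: "B (g x) z = 0" if "x \<in> F0" "z \<in> A" for x z
    using fun_cong[OF PBg[OF that(1)], of z] that(2) by (simp add: prj_def)
  have ker: "\<exists>cf. u = lincomb (g ` F0) cf" if u: "u \<in> ell2_on UNIV" and Bu: "B u = (\<lambda>_. 0)" for u
  proof -
    define w where "w = (\<lambda>z. u z - (\<Sum>x\<in>F0. u x * g x z))"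
    have sV: "(\<lambda>z. \<Sum>x\<in>F0. u x * g x z) \<in> ell2_on UNIV" by (rule V_sum[OF F0 gV])
    have wU: "w \<in> ell2_on UNIV" unfolding w_def by (rule V_diff[OF u sV])
    have wA: "w \<in> ell2_on A"
    proof -
      have "w z = 0" if z: "z \<notin> A" for z
      proof -
        have zF: "z \<in> F0" using z F0_def by simp
        have "(\<Sum>x\<in>F0. u x * g x z) = (\<Sum>x\<in>F0. if x = z then u x else 0)"
          by (rule sum.cong) (use gF[OF zF] in auto)
        also have "\<dots> = u z" using F0 zF by simp
        finally show ?thesis by (simp add: w_def)
      qed
      then show ?thesis using wU by (simp add: ell2_on_iff)
    qed
    have "B w = (\<lambda>z. B u z - (\<Sum>x\<in>F0. u x * B (g x) z))"
      unfolding w_def lin_diff[OF linB u sV] lin_sum[OF linB F0 gV] by simp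
    then have "prj A (B w) = (\<lambda>z. 0)"
      using Bu Bg0 by (auto simp: prj_def intro!: ext sum.neutral)
    then have "BA w = (\<lambda>z. 0)" using BA_B[OF wA] by simp
    then have "(mA A - t) * ell2_norm w \<le> 0" using low[OF wA] by simp
    then have "ell2_norm w \<le> 0" using c by (simp add: mult_le_0_iff)
    then have "w = (\<lambda>z. 0)" using nrm_eq0 V_l2[OF wU] nrm_nonneg[of w] by fastforce
    then have "u = (\<lambda>z. \<Sum>x\<in>F0. u x * g x z)" unfolding w_def by (metis (no_types, lifting) eq_iff_diff_eq_0 ext)
    also have "\<dots> = lincomb (g ` F0) (\<lambda>f. \<Sum>z\<in>F0. f z * u z)"
      by (rule lincomb_reindex[OF F0 gF, symmetric])
    finally show ?thesis by blast
  qed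
  have ran: "\<exists>u\<in>ell2_on UNIV. \<exists>cf. v = (\<lambda>x. B u x + lincomb (dlt ` F0) cf x)" if v: "v \<in> ell2_on UNIV" for v
  proof -
    have pv: "prj A v \<in> ell2_on A" by (rule prj_l2(1)[OF V_l2[OF v]])
    define u where "u = S (prj A v)"
    have uA: "u \<in> ell2_on A" unfolding u_def by (rule SV[OF pv])
    define r where "r = (\<lambda>z. v z - B u z)"
    have BAu: "BA u = prj A v" using S pv u_def by blast
    have r0: "r z = 0" if "z \<notin> F0" for z
    proof -
      have zA: "z \<in> A" using that F0_def by simp
      have "BA u z = prj A v z" using BAu by simp
      then have "B u z = v z" using BA_B[OF uA] zA by (simp add: prj_def)
      then show ?thesis by (simp add: r_def)
    qed
    have "lincomb (dlt ` F0) (\<lambda>f. \<Sum>z\<in>F0. f z * r z) = (\<lambda>y. \<Sum>x\<in>F0. r x * dlt x y)"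
      by (rule lincomb_reindex[OF F0]) (simp add: dlt_def)
    also have "\<dots> = r" using delta_sum[OF F0 r0] by (simp add: dlt_def)
    finally have "v = (\<lambda>x. B u x + lincomb (dlt ` F0) (\<lambda>f. \<Sum>z\<in>F0. f z * r z) x)"
      by (simp add: r_def)
    then show ?thesis using VU[OF uA] by blast
  qed
  show ?thesis unfolding fredholm_on_def B_def[symmetric]
  proof (intro conjI)
    show "\<exists>F. finite F \<and> F \<subseteq> ell2_on UNIV \<and> (\<forall>u\<in>ell2_on UNIV. B u = (\<lambda>_. 0) \<longrightarrow> (\<exists>c. u = lincomb F c))"
      using ker F0 gV by (intro exI[of _ "g ` F0"]) auto
    show "\<exists>F. finite F \<and> F \<subseteq> ell2_on UNIV \<and> (\<forall>v\<in>ell2_on UNIV. \<exists>u\<in>ell2_on UNIV. \<exists>c. v = (\<lambda>x. B u x + lincomb F c x))"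
      using ran F0 dltV by (intro exI[of _ "dlt ` F0"]) auto
  qed
qed

end



lemma tail_small:
  assumes g: "l2 g" and e: "e > 0"
  shows "\<exists>E. finite E \<and> ell2_norm (prj (- E) g) \<le> e"
proof -
  have sm: "(\<lambda>x. (cmod (g x))^2) summable_on UNIV" using g by (simp add: l2_def)
  obtain E where E: "finite E" "dist (\<Sum>x\<in>E. (cmod (g x))^2) (infsum (\<lambda>x. (cmod (g x))^2) UNIV) \<le> e^2"
    using infsum_finite_approximation[OF sm, of "e^2"] e by auto
  have *: "L2_set (\<lambda>x. cmod (prj (- E) g x)) F \<le> e" if F: "finite F" for F
  proof -
    have a: "(\<Sum>x\<in>F. (cmod (prj (- E) g x))^2) = (\<Sum>x\<in>F - E. (cmod (g x))^2)"
      using F by (intro sum.mono_neutral_cong_right) (auto simp: prj_def)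
    have b: "(\<Sum>x\<in>F \<union> E. (cmod (g x))^2) = (\<Sum>x\<in>F - E. (cmod (g x))^2) + (\<Sum>x\<in>E. (cmod (g x))^2)"
    proof -
      have disj: "(F - E) \<inter> E = {}" by blast
      have "(\<Sum>x\<in>(F - E) \<union> E. (cmod (g x))^2) = (\<Sum>x\<in>F - E. (cmod (g x))^2) + (\<Sum>x\<in>E. (cmod (g x))^2)"
        by (rule sum.union_disjoint) (use F E(1) disj in auto)
      then show ?thesis by simp
    qed
    have c: "(\<Sum>x\<in>F \<union> E. (cmod (g x))^2) \<le> infsum (\<lambda>x. (cmod (g x))^2) UNIV"
      using F E(1) by (intro finite_sum_le_infsum[OF sm]) auto
    have d: "infsum (\<lambda>x. (cmod (g x))^2) UNIV \<le> (\<Sum>x\<in>E. (cmod (g x))^2) + e^2"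
      using E(2) by (simp add: dist_real_def)
    have "(\<Sum>x\<in>F. (cmod (prj (- E) g x))^2) \<le> e^2" using a b c d by linarith
    then have "sqrt (\<Sum>x\<in>F. (cmod (prj (- E) g x))^2) \<le> sqrt (e^2)" by (rule real_sqrt_le_mono)
    then show ?thesis using e by (simp add: L2_set_def)
  qed
  show ?thesis using l2_boundI(2)[OF *] E(1) by blast
qed

lemma prj_finite_nrm:
  assumes F: "finite F"
  shows "ell2_norm (prj F w) \<le> (\<Sum>x\<in>F. cmod (w x))"
proof -
  have *: "L2_set (\<lambda>x. cmod (prj F w x)) F' \<le> (\<Sum>x\<in>F. cmod (w x))" if F': "finite F'" for F'
  proof -
    have "L2_set (\<lambda>x. cmod (prj F w x)) F' \<le> (\<Sum>x\<in>F'. cmod (prj F w x))"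
      by (rule L2_set_le_sum) simp
    also have "\<dots> = (\<Sum>x\<in>F' \<inter> F. cmod (w x))"
      using F' by (intro sum.mono_neutral_cong_right) (auto simp: prj_def)
    also have "\<dots> \<le> (\<Sum>x\<in>F. cmod (w x))"
      using F by (intro sum_mono2) auto
    finally show ?thesis .
  qed
  show ?thesis by (rule l2_boundI(2)[OF *])
qed

lemma (in hop) ip_dlt_right: "ell2_inner w (dlt a) = w a"
proof -
  have "ell2_inner w (dlt a) = infsum (\<lambda>y. w y * cnj (dlt a y)) {a}"
    unfolding ell2_inner_def by (rule infsum_cong_neutral) (auto simp: dlt_def)
  then show ?thesis by (simp add: dlt_def)
qed

lemma ip_zero_disj:
  assumes "\<And>x. u x = 0 \<or> v x = 0"
  shows "ell2_inner u v = 0"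
proof -
  have "(\<lambda>x. u x * cnj (v x)) = (\<lambda>x. 0)" using assms by (metis complex_cnj_zero mult_eq_0_iff)
  then show ?thesis by (simp add: ell2_inner_def)
qed

lemma ip_restrict:
  assumes "\<And>x. x \<in> E \<Longrightarrow> u x = 0"
  shows "ell2_inner g u = ell2_inner (prj (- E) g) u"
  unfolding ell2_inner_def prj_def by (rule infsum_cong) (use assms in auto)

lemma ip_sum_left:
  assumes w: "l2 w" and I: "finite I" and f: "\<And>i. i \<in> I \<Longrightarrow> f i \<in> ell2_on UNIV"
  shows "ell2_inner (\<lambda>y. \<Sum>i\<in>I. c i * f i y) w = (\<Sum>i\<in>I. c i * ell2_inner (f i) w)"
  using I f
proof (induction I rule: finite_induct)
  case empty then show ?case by (simp add: ell2_inner_def)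
next
  case (insert a I)
  have s: "l2 (\<lambda>y. \<Sum>i\<in>I. c i * f i y)" using V_sum[of I f UNIV c] insert V_l2 by blast
  have fa: "l2 (f a)" using insert V_l2 by blast
  have "ell2_inner (\<lambda>y. c a * f a y + (\<Sum>i\<in>I. c i * f i y)) w
      = ell2_inner (\<lambda>y. c a * f a y) w + ell2_inner (\<lambda>y. \<Sum>i\<in>I. c i * f i y) w"
    by (rule ip_add_left[OF l2_scale(1)[OF fa] s w])
  then show ?case using insert ip_scale_left[OF fa w] by simp
qed



lemma ip_restrict_right:
  assumes "\<And>x. x \<in> E \<Longrightarrow> u x = 0"
  shows "ell2_inner u w = ell2_inner u (prj (- E) w)"
  unfolding ell2_inner_def prj_def by (rule infsum_cong) (use assms in auto)

locale hop_inf = hop +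
  assumes inf: "infinite (UNIV :: 'a set)"
begin

definition Cof :: "'a set set" where "Cof = {A. finite (- A)}"
definition mu :: real where "mu = Sup (mA ` Cof)"

lemma Cof_ne: "finite (- (A::'a set)) \<Longrightarrow> A \<noteq> {}"
  using inf by auto

lemma mu_bdd: "bdd_above (mA ` Cof)"
proof (rule bdd_aboveI2[of _ _ K])
  fix A assume "A \<in> Cof"
  then have "A \<noteq> {}" using Cof_ne by (simp add: Cof_def)
  then show "mA A \<le> K" by (rule mA_le)
qed

lemma Cof_image_ne: "mA ` Cof \<noteq> {}"
  by (auto simp: Cof_def intro!: exI[of _ UNIV])

lemma mA_le_mu: "finite (- A) \<Longrightarrow> mA A \<le> mu"
  unfolding mu_def by (rule cSup_upper[OF _ mu_bdd]) (simp add: Cof_def)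

lemma mu_approx: "e > 0 \<Longrightarrow> \<exists>A. finite (- A) \<and> mu - e < mA A"
proof -
  assume e: "e > 0"
  have "mu - e < Sup (mA ` Cof)" using e by (simp add: mu_def)
  then obtain y where "y \<in> mA ` Cof" "mu - e < y"
    using less_cSup_iff[OF Cof_image_ne mu_bdd] by blast
  then show ?thesis by (auto simp: Cof_def)
qed

lemma weyl:
  assumes e: "\<epsilon> > 0" and D: "finite D" and G: "finite G" "G \<subseteq> ell2_on UNIV"
  shows "\<exists>u\<in>ell2_on UNIV. finite {x. u x \<noteq> 0} \<and> (\<forall>x\<in>D. u x = 0) \<and>
           1/2 \<le> ell2_norm u \<and> ell2_norm u \<le> 1 \<and>
           ell2_norm (sh UNIV (complex_of_real mu) u) \<le> \<epsilon> \<and>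
           (\<forall>g\<in>G. cmod (ell2_inner g u) \<le> \<epsilon>)"
proof -
  define L where "L = K + \<bar>mu\<bar> + 1"
  have L: "L \<ge> 1" using K0 by (simp add: L_def)
  define \<eta> where "\<eta> = min 1 (min (\<epsilon>/6) (\<epsilon>^2 / (18 * L)))"
  have \<eta>: "\<eta> > 0" "\<eta> \<le> 1" "\<eta> \<le> \<epsilon>/6" "\<eta> \<le> \<epsilon>^2 / (18 * L)"
    using e L by (auto simp: \<eta>_def)
  define \<delta> where "\<delta> = min (1/2) (\<epsilon> / (3 * L))"
  have \<delta>: "\<delta> > 0" "\<delta> \<le> 1/2" "\<delta> \<le> \<epsilon> / (3 * L)"
    using e L by (auto simp: \<delta>_def)
  obtain A0 where A0: "finite (- A0)" "mu - \<eta> < mA A0" using mu_approx[OF \<eta>(1)] by blast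
  have "\<forall>g\<in>G. \<exists>E. finite E \<and> ell2_norm (prj (- E) g) \<le> \<epsilon>"
    using tail_small[OF _ e] G(2) V_l2 by blast
  then obtain fE where fE: "\<And>g. g \<in> G \<Longrightarrow> finite (fE g) \<and> ell2_norm (prj (- fE g) g) \<le> \<epsilon>"
    by metis
  define A1 where "A1 = A0 \<inter> - D \<inter> - (\<Union>g\<in>G. fE g)"
  have A1f: "finite (- A1)" using A0(1) D G(1) fE by (simp add: A1_def)
  define F1 where "F1 = - A1"
  define n1 where "n1 = card F1"
  have "\<forall>x\<in>F1. \<exists>E. finite E \<and> ell2_norm (prj (- E) (T (dlt x))) \<le> \<eta> / (n1 + 1)"
    using tail_small[OF V_l2[OF TV[OF dlt_V[OF UNIV_I]]]] \<eta>(1) by simp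
  then obtain fX where fX: "\<And>x. x \<in> F1 \<Longrightarrow> finite (fX x) \<and> ell2_norm (prj (- fX x) (T (dlt x))) \<le> \<eta> / (n1 + 1)"
    by metis
  define A where "A = A1 \<inter> - (\<Union>x\<in>F1. fX x)"
  have Af: "finite (- A)" using A1f fX by (simp add: A_def F1_def)
  have AA1: "A \<subseteq> A1" by (auto simp: A_def)
  have A1A0: "A1 \<subseteq> A0" by (auto simp: A1_def)
  obtain u0 where u0: "u0 \<in> ell2_on A" "ell2_norm u0 = 1" "qf u0 < mA A + \<eta>"
    using mA_approx[OF Cof_ne[OF Af] \<eta>(1)] by blast
  have qu0: "qf u0 < mu + \<eta>" using u0(3) mA_le_mu[OF Af] by linarith
  obtain E where E: "finite E" "ell2_norm (prj (- E) u0) \<le> \<delta>"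
    using tail_small[OF V_l2[OF u0(1)] \<delta>(1)] by blast
  define u1 where "u1 = prj E u0"
  have u1A: "u1 \<in> ell2_on A"
  proof -
    have "l2 u1" unfolding u1_def by (rule V_l2[OF prj_l2(1)[OF V_l2[OF u0(1)]]])
    then show ?thesis using V_zero[OF u0(1)] by (auto simp: ell2_on_iff u1_def prj_def)
  qed
  have u1U: "u1 \<in> ell2_on UNIV" by (rule V_mono[OF subset_UNIV u1A])
  have u1A1: "u1 \<in> ell2_on A1" by (rule V_mono[OF AA1 u1A])
  have u0A1: "u0 \<in> ell2_on A1" by (rule V_mono[OF AA1 u0(1)])
  have l0: "l2 u0" "l2 u1" using u0(1) u1A V_l2 by blast+
  have fin: "finite {x. u1 x \<noteq> 0}"
    by (rule finite_subset[OF _ E(1)]) (auto simp: u1_def prj_def)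
  have Dz: "\<forall>x\<in>D. u1 x = 0" using V_zero[OF u1A] by (auto simp: A_def A1_def)
  have d01: "(\<lambda>x. u0 x - u1 x) = prj (- E) u0" by (auto simp: u1_def prj_def)
  have nd: "ell2_norm (\<lambda>x. u0 x - u1 x) \<le> \<delta>" using E(2) d01 by simp
  have nu1: "ell2_norm u1 \<le> 1" using prj_l2(2)[OF l0(1), of E] u0(2) by (simp add: u1_def)
  have nu1': "1/2 \<le> ell2_norm u1"
  proof -
    have "ell2_norm (\<lambda>x. u1 x + (u0 x - u1 x)) \<le> ell2_norm u1 + ell2_norm (\<lambda>x. u0 x - u1 x)"
      by (rule l2_add(2)[OF l0(2) l2_diff(1)[OF l0]])
    then show ?thesis using u0(2) nd \<delta>(2) by simp
  qed
  have ipG: "cmod (ell2_inner g u1) \<le> \<epsilon>" if g: "g \<in> G" for g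
  proof -
    have z: "u1 x = 0" if "x \<in> fE g" for x using V_zero[OF u1A] that g by (auto simp: A_def A1_def)
    have "ell2_inner g u1 = ell2_inner (prj (- fE g) g) u1" by (rule ip_restrict[OF z])
    also have "cmod \<dots> \<le> ell2_norm (prj (- fE g) g) * ell2_norm u1"
      by (rule ip_CS[OF prj_l2(1)[THEN V_l2] l0(2)]) (use G g V_l2 in blast)
    also have "\<dots> \<le> \<epsilon> * 1" using fE[OF g] nu1 e by (intro mult_mono) (auto simp: nrm_nonneg)
    finally show ?thesis by simp
  qed
  define B where "B = sh UNIV (complex_of_real mu)"
  have B_eq: "B w = (\<lambda>x. T w x - complex_of_real mu * w x)" for w by (simp add: B_def sh_UNIV)
  have Bu1V: "B u1 \<in> ell2_on UNIV" unfolding B_def by (rule lin_V[OF sh_lin u1U])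
  have split: "B u1 = (\<lambda>x. prj A1 (B u1) x + prj F1 (B u1) x)" by (auto simp: prj_def F1_def)
  have nB: "ell2_norm (B u1) \<le> ell2_norm (prj A1 (B u1)) + ell2_norm (prj F1 (B u1))"
    by (subst split, rule l2_add(2)) (use prj_l2(1) V_l2 Bu1V in blast)+
  have pa: "ell2_norm (prj F1 (B u1)) \<le> \<eta>"
  proof -
    have pt: "cmod (B u1 x) \<le> \<eta> / (n1 + 1)" if x: "x \<in> F1" for x
    proof -
      have u1x: "u1 x = 0" using V_zero[OF u1A1] x by (simp add: F1_def)
      have z: "u1 y = 0" if "y \<in> fX x" for y using V_zero[OF u1A] that x by (auto simp: A_def)
      have "B u1 x = T u1 x" using u1x B_eq by simp
      also have "\<dots> = ell2_inner (T u1) (dlt x)" by (simp add: ip_dlt_right)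
      also have "\<dots> = ell2_inner u1 (T (dlt x))" by (rule T_herm[OF u1U dlt_V]) simp
      also have "\<dots> = ell2_inner u1 (prj (- fX x) (T (dlt x)))" by (rule ip_restrict_right[OF z])
      finally have "cmod (B u1 x) \<le> ell2_norm u1 * ell2_norm (prj (- fX x) (T (dlt x)))"
        using ip_CS[OF l0(2) prj_l2(1)[THEN V_l2]] V_l2[OF TV[OF dlt_V[OF UNIV_I]]] by metis
      also have "\<dots> \<le> 1 * (\<eta> / (n1 + 1))" using fX[OF x] nu1 by (intro mult_mono) (auto simp: nrm_nonneg)
      finally show ?thesis by simp
    qed
    have "ell2_norm (prj F1 (B u1)) \<le> (\<Sum>x\<in>F1. cmod (B u1 x))"
      by (rule prj_finite_nrm) (simp add: F1_def A1f)
    also have "\<dots> \<le> (\<Sum>x\<in>F1. \<eta> / (n1 + 1))" by (rule sum_mono) (rule pt)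
    also have "\<dots> = n1 * (\<eta> / (n1 + 1))" by (simp add: n1_def)
    also have "\<dots> \<le> \<eta>" using \<eta>(1) by (simp add: field_simps)
    finally show ?thesis .
  qed
  define B1 where "B1 = sh A1 (complex_of_real (mu - \<eta>))"
  define K1 where "K1 = K + cmod (complex_of_real (mu - \<eta>))"
  have K1L: "K1 \<le> L"
  proof -
    have a: "cmod (complex_of_real (mu - \<eta>)) = \<bar>mu - \<eta>\<bar>" by (simp only: norm_of_real)
    show ?thesis using \<eta>(1,2) unfolding K1_def L_def a by arith
  qed
  have K10: "K1 \<ge> 0" using K0 by (simp add: K1_def)
  have bnd1: "bnd_on A1 B1 K1" unfolding B1_def K1_def by (rule sh_bnd)
  have lin1: "lin_on A1 B1" unfolding B1_def by (rule sh_lin)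
  have psd1: "Re (ell2_inner (B1 w) w) \<ge> 0" if w: "w \<in> ell2_on A1" for w
  proof -
    have "qf w \<ge> mA A0 * (ell2_norm w)^2" by (rule mA_quad[OF V_mono[OF A1A0 w]])
    moreover have "mA A0 * (ell2_norm w)^2 \<ge> (mu - \<eta>) * (ell2_norm w)^2"
      using A0(2) by (intro mult_right_mono) auto
    ultimately show ?thesis unfolding B1_def Re_sh[OF w] by linarith
  qed
  have "(ell2_norm (B1 u0))^2 \<le> K1 * Re (ell2_inner (B1 u0) u0)"
    unfolding B1_def K1_def by (rule psd_bound[OF sh_lin sh_bnd sh_herm psd1[unfolded B1_def] u0A1])
  also have "\<dots> = K1 * (qf u0 - (mu - \<eta>))" unfolding B1_def Re_sh[OF u0A1] using u0(2) by simp
  also have "\<dots> \<le> K1 * (2 * \<eta>)" using qu0 K10 by (intro mult_left_mono) auto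
  also have "\<dots> \<le> L * (2 * \<eta>)" using K1L \<eta>(1) by (intro mult_right_mono) auto
  also have "\<dots> \<le> L * (2 * (\<epsilon>^2 / (18 * L)))" using \<eta>(4) L by (intro mult_left_mono) auto
  also have "\<dots> = (\<epsilon>/3)^2" using L by (simp add: power2_eq_square)
  finally have sq: "(ell2_norm (B1 u0))^2 \<le> (\<epsilon>/3)^2" .
  have nB1u0: "ell2_norm (B1 u0) \<le> \<epsilon>/3"
    by (rule power2_le_imp_le[OF sq]) (use e in simp)
  have nB1u1: "ell2_norm (B1 u1) \<le> ell2_norm (B1 u0) + K1 * \<delta>"
  proof -
    have dV: "(\<lambda>x. u0 x - u1 x) \<in> ell2_on A1" by (rule V_diff[OF u0A1 u1A1])
    have e1: "B1 u1 = (\<lambda>x. B1 u0 x - B1 (\<lambda>x. u0 x - u1 x) x)"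
      using lin_diff[OF lin1 u0A1 u1A1] by (auto intro!: ext)
    have l: "l2 (B1 u0)" "l2 (B1 (\<lambda>x. u0 x - u1 x))"
      using V_l2[OF lin_V[OF lin1 u0A1]] V_l2[OF lin_V[OF lin1 dV]] by auto
    have "ell2_norm (\<lambda>x. B1 u0 x - B1 (\<lambda>x. u0 x - u1 x) x) \<le> ell2_norm (B1 u0) + ell2_norm (B1 (\<lambda>x. u0 x - u1 x))"
      by (rule l2_diff(2)[OF l])
    then have "ell2_norm (B1 u1) \<le> ell2_norm (B1 u0) + ell2_norm (B1 (\<lambda>x. u0 x - u1 x))"
      using e1 by simp
    also have "K1 * ell2_norm (\<lambda>x. u0 x - u1 x) \<le> K1 * \<delta>" using nd K10 by (rule mult_left_mono)
    then have "ell2_norm (B1 u0) + ell2_norm (B1 (\<lambda>x. u0 x - u1 x)) \<le> ell2_norm (B1 u0) + K1 * \<delta>"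
      using bnd_le[OF bnd1 dV] by linarith
    finally show ?thesis .
  qed
  have pb: "ell2_norm (prj A1 (B u1)) \<le> ell2_norm (B1 u1) + \<eta>"
  proof -
    have e2: "prj A1 (B u1) = (\<lambda>x. B1 u1 x - complex_of_real \<eta> * u1 x)"
      using V_zero[OF u1A1] by (auto simp: prj_def B1_def sh_def B_eq algebra_simps intro!: ext)
    have "ell2_norm (prj A1 (B u1)) \<le> ell2_norm (B1 u1) + ell2_norm (\<lambda>x. complex_of_real \<eta> * u1 x)"
      unfolding e2 by (rule l2_diff(2)) (use lin_V[OF lin1 u1A1] V_l2 l2_scale(1)[OF l0(2)] in blast)+
    also have "ell2_norm (\<lambda>x. complex_of_real \<eta> * u1 x) = \<eta> * ell2_norm u1"
      using l2_scale(2)[OF l0(2)] \<eta>(1) by simp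
    also have "\<dots> \<le> \<eta>" using nu1 \<eta>(1) by (simp add: mult_left_le)
    finally show ?thesis by simp
  qed
  have "K1 * \<delta> \<le> \<epsilon>/3"
  proof -
    have "K1 * \<delta> \<le> L * (\<epsilon> / (3 * L))" using K1L \<delta> K10 by (intro mult_mono) auto
    also have "\<dots> = \<epsilon>/3" using L by simp
    finally show ?thesis .
  qed
  then have "ell2_norm (B u1) \<le> \<epsilon>" using nB pa pb nB1u1 nB1u0 \<eta>(3) by linarith
  then show ?thesis using u1U fin Dz nu1 nu1' ipG unfolding B_def by blast
qed

end



context hop_inf
begin

lemma mu_not_fredholm: "\<not> fredholm_on UNIV (sh UNIV (complex_of_real mu))"
proof
  define B where "B = sh UNIV (complex_of_real mu)"
  assume "fredholm_on UNIV (sh UNIV (complex_of_real mu))"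
  then obtain G where G: "finite G" "G \<subseteq> ell2_on UNIV"
    and ran: "\<forall>v\<in>ell2_on UNIV. \<exists>w\<in>ell2_on UNIV. \<exists>c. v = (\<lambda>x. B w x + lincomb G c x)"
    unfolding fredholm_on_def B_def by blast
  have linB: "lin_on UNIV B" unfolding B_def by (rule sh_lin)
  have hermB: "herm_on UNIV B" unfolding B_def by (rule sh_herm)
  define Wp where "Wp k D u \<longleftrightarrow> u \<in> ell2_on UNIV \<and> finite {x. u x \<noteq> 0} \<and> (\<forall>x\<in>D. u x = 0) \<and>
      1/2 \<le> ell2_norm u \<and> ell2_norm u \<le> 1 \<and> ell2_norm (B u) \<le> (1/4::real)^k \<and>
      (\<forall>g\<in>G. cmod (ell2_inner g u) \<le> (1/4::real)^k)" for k :: nat and D u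
  have exW: "\<exists>u. Wp k D u" if "finite D" for k D
    using weyl[of "(1/4::real)^k" D G] that G unfolding Wp_def B_def by auto
  define nxt where "nxt k D = (SOME u. Wp k D u)" for k D
  define Ds where "Ds = rec_nat {} (\<lambda>k D. D \<union> {x. nxt k D x \<noteq> 0})"
  have Ds0: "Ds 0 = {}" and DsS: "Ds (Suc k) = Ds k \<union> {x. nxt k (Ds k) x \<noteq> 0}" for k
    by (simp_all add: Ds_def)
  define u where "u k = nxt k (Ds k)" for k
  have all: "finite (Ds k) \<and> Wp k (Ds k) (u k)" for k
  proof (induction k)
    case 0
    have "\<exists>u. Wp 0 (Ds 0) u" by (rule exW) (simp add: Ds0)
    then have "Wp 0 (Ds 0) (SOME u. Wp 0 (Ds 0) u)" by (rule someI_ex)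
    then have "Wp 0 (Ds 0) (nxt 0 (Ds 0))" by (simp add: nxt_def)
    then show ?case by (simp add: Ds0 u_def)
  next
    case (Suc k)
    have f: "finite (Ds (Suc k))" using Suc unfolding DsS Wp_def u_def by simp
    have "\<exists>u. Wp (Suc k) (Ds (Suc k)) u" by (rule exW[OF f])
    then have "Wp (Suc k) (Ds (Suc k)) (SOME u. Wp (Suc k) (Ds (Suc k)) u)" by (rule someI_ex)
    then have "Wp (Suc k) (Ds (Suc k)) (nxt (Suc k) (Ds (Suc k)))" by (simp add: nxt_def)
    then show ?case using f by (simp add: u_def)
  qed
  have W: "Wp k (Ds k) (u k)" for k using all by blast
  have uV: "u k \<in> ell2_on UNIV" for k using W[of k] by (simp add: Wp_def)
  have ul2: "l2 (u k)" for k using V_l2[OF uV] .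
  have un: "1/2 \<le> ell2_norm (u k)" "ell2_norm (u k) \<le> 1" for k using W[of k] by (simp_all add: Wp_def)
  have uB: "ell2_norm (B (u k)) \<le> (1/4::real)^k" for k using W[of k] by (simp add: Wp_def)
  have uG: "cmod (ell2_inner g (u k)) \<le> (1/4::real)^k" if "g \<in> G" for g k using W[of k] that by (simp add: Wp_def)
  have Dmono: "Ds j \<subseteq> Ds k" if "j \<le> k" for j k
    using that by (induction k rule: dec_induct) (auto simp: DsS)
  have disj: "u j x = 0 \<or> u k x = 0" if "j \<noteq> k" for j k x
  proof -
    have *: "u j x = 0 \<or> u k x = 0" if jk: "j < k" for j k
    proof (cases "u j x = 0")
      case False
      then have "x \<in> Ds (Suc j)" by (simp add: DsS u_def)
      then have "x \<in> Ds k" using Dmono[of "Suc j" k] jk by auto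
      then have "u k x = 0" using W[of k] by (simp add: Wp_def)
      then show ?thesis by simp
    qed simp
    show ?thesis using that *[of j k] *[of k j] by (cases "j < k") auto
  qed
  have ortho: "ell2_inner (u j) (u k) = 0" if "j \<noteq> k" for j k
    by (rule ip_zero_disj) (use disj[OF that] in auto)
  define h :: real where "h = 1/2"
  define s where "s n = (\<lambda>y. \<Sum>j<n. complex_of_real (h^j) * u j y)" for n
  have sV: "s n \<in> ell2_on UNIV" for n unfolding s_def by (rule V_sum) (auto intro: uV)
  have sS: "(\<lambda>y. s (Suc m) y - s n y) = (\<lambda>y. (s m y - s n y) + complex_of_real (h^m) * u m y)" for m n
    by (simp add: s_def algebra_simps)
  have sb: "ell2_norm (\<lambda>y. s m y - s n y) \<le> 2 * (h^n - h^m)" if "n \<le> m" for n m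
    using that
  proof (induction m rule: dec_induct)
    case base then show ?case by simp
  next
    case (step m)
    have "ell2_norm (\<lambda>y. s (Suc m) y - s n y) \<le> ell2_norm (\<lambda>y. s m y - s n y) + ell2_norm (\<lambda>y. complex_of_real (h^m) * u m y)"
      unfolding sS by (rule l2_add(2)) (use l2_diff(1) V_l2 sV l2_scale(1) ul2 in blast)+
    also have "ell2_norm (\<lambda>y. complex_of_real (h^m) * u m y) = h^m * ell2_norm (u m)"
      using l2_scale(2)[OF ul2] by (simp add: h_def norm_power norm_divide)
    also have "\<dots> \<le> h^m" using un(2)[of m] by (simp add: h_def mult_left_le)
    finally show ?case using step.IH by (simp add: h_def)
  qed
  have b0: "(\<lambda>n. 2 * h^n) \<longlonglongrightarrow> 0"
  proof -
    have "(\<lambda>n. 2 * h^n) \<longlonglongrightarrow> 2 * 0" by (intro tendsto_intros LIMSEQ_power_zero) (simp add: h_def)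
    then show ?thesis by simp
  qed
  have sb': "ell2_norm (\<lambda>y. s m y - s n y) \<le> 2 * h^n" if "n \<le> m" for n m
  proof -
    have "(0::real) \<le> h^m" by (simp add: h_def)
    then have "2 * (h^n - h^m) \<le> 2 * h^n" by simp
    then show ?thesis using sb[OF that] by (rule order_trans[rotated])
  qed
  obtain v where v: "v \<in> ell2_on UNIV" and vb: "\<And>n. ell2_norm (\<lambda>x. v x - s n x) \<le> 2 * h^n"
    using ell2_complete[OF sV b0 sb'] by blast
  have ipv: "ell2_inner v (u k) = complex_of_real (h^k * (ell2_norm (u k))^2)" for k
  proof -
    define ck where "ck = complex_of_real (h^k * (ell2_norm (u k))^2)"
    have sk: "ell2_inner (s n) (u k) = ck" if "k < n" for n
    proof -
      have "ell2_inner (s n) (u k) = (\<Sum>j<n. complex_of_real (h^j) * ell2_inner (u j) (u k))"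
        unfolding s_def by (rule ip_sum_left) (auto intro: ul2 uV)
      also have "\<dots> = complex_of_real (h^k) * ell2_inner (u k) (u k)"
      proof -
        have "(\<Sum>j<n. complex_of_real (h^j) * ell2_inner (u j) (u k))
            = complex_of_real (h^k) * ell2_inner (u k) (u k) + (\<Sum>j\<in>{..<n} - {k}. complex_of_real (h^j) * ell2_inner (u j) (u k))"
          using that by (subst sum.remove[of _ k]) auto
        moreover have "(\<Sum>j\<in>{..<n} - {k}. complex_of_real (h^j) * ell2_inner (u j) (u k)) = 0"
          by (rule sum.neutral) (auto simp: ortho)
        ultimately show ?thesis by simp
      qed
      finally show ?thesis using ip_self[OF ul2] by (simp add: ck_def)
    qed
    have "cmod (ell2_inner v (u k) - ck) \<le> 0"
    proof (rule LIMSEQ_le_const[OF b0])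
      show "\<exists>N. \<forall>n\<ge>N. cmod (ell2_inner v (u k) - ck) \<le> 2 * h^n"
      proof (intro exI allI impI)
        fix n assume n: "n \<ge> Suc k"
        have "ell2_inner v (u k) - ck = ell2_inner (\<lambda>x. v x - s n x) (u k)"
          using sk[of n] n ip_diff_left[OF V_l2[OF v] V_l2[OF sV] ul2] by simp
        also have "cmod \<dots> \<le> ell2_norm (\<lambda>x. v x - s n x) * ell2_norm (u k)"
          by (rule ip_CS[OF l2_diff(1)[OF V_l2[OF v] V_l2[OF sV]] ul2])
        also have "\<dots> \<le> 2 * h^n * 1"
          using vb[of n] un(2)[of k] by (intro mult_mono) (auto simp: nrm_nonneg h_def)
        finally show "cmod (ell2_inner v (u k) - ck) \<le> 2 * h^n" by simp
      qed
    qed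
    then show ?thesis by (simp add: ck_def)
  qed
  obtain w c where w: "w \<in> ell2_on UNIV" and vw: "v = (\<lambda>x. B w x + lincomb G c x)"
    using ran v by blast
  define M where "M = ell2_norm w + (\<Sum>f\<in>G. cmod (c f))"
  have lcV: "lincomb G c \<in> ell2_on UNIV" unfolding lincomb_def by (rule V_sum) (use G in auto)
  have BwV: "B w \<in> ell2_on UNIV" by (rule lin_V[OF linB w])
  have bound: "h^k / 4 \<le> M * (1/4)^k" for k
  proof -
    have "ell2_inner v (u k) = ell2_inner (B w) (u k) + ell2_inner (lincomb G c) (u k)"
      unfolding vw by (rule ip_add_left[OF V_l2[OF BwV] V_l2[OF lcV] ul2])
    also have "ell2_inner (B w) (u k) = ell2_inner w (B (u k))"
      using hermB w uV unfolding herm_on_def by blast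
    also have "ell2_inner (lincomb G c) (u k) = (\<Sum>f\<in>G. c f * ell2_inner f (u k))"
      unfolding lincomb_def by (rule ip_sum_left[OF ul2 G(1)]) (use G in auto)
    finally have e: "ell2_inner v (u k) = ell2_inner w (B (u k)) + (\<Sum>f\<in>G. c f * ell2_inner f (u k))" .
    have a: "cmod (ell2_inner w (B (u k))) \<le> ell2_norm w * (1/4)^k"
    proof -
      have "cmod (ell2_inner w (B (u k))) \<le> ell2_norm w * ell2_norm (B (u k))"
        by (rule ip_CS[OF V_l2[OF w] V_l2[OF lin_V[OF linB uV]]])
      also have "\<dots> \<le> ell2_norm w * (1/4)^k" using uB[of k] by (intro mult_left_mono) (auto simp: nrm_nonneg)
      finally show ?thesis .
    qed
    have b: "cmod (\<Sum>f\<in>G. c f * ell2_inner f (u k)) \<le> (\<Sum>f\<in>G. cmod (c f)) * (1/4)^k"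
    proof -
      have "cmod (\<Sum>f\<in>G. c f * ell2_inner f (u k)) \<le> (\<Sum>f\<in>G. cmod (c f * ell2_inner f (u k)))"
        by (rule norm_sum)
      also have "\<dots> \<le> (\<Sum>f\<in>G. cmod (c f) * (1/4)^k)"
        by (rule sum_mono) (use uG in \<open>auto simp: norm_mult intro!: mult_left_mono\<close>)
      also have "\<dots> = (\<Sum>f\<in>G. cmod (c f)) * (1/4)^k" by (simp add: sum_distrib_right)
      finally show ?thesis .
    qed
    have "h^k / 4 \<le> h^k * (ell2_norm (u k))^2"
    proof -
      have "1/4 \<le> (ell2_norm (u k))^2" using un(1)[of k] power_mono[of "1/2" "ell2_norm (u k)" 2] by (simp add: power2_eq_square)
      then show ?thesis by (simp add: h_def)
    qed
    also have "\<dots> = cmod (ell2_inner v (u k))"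
    proof -
      have "cmod (ell2_inner v (u k)) = \<bar>h^k * (ell2_norm (u k))^2\<bar>" unfolding ipv[of k] by (rule norm_of_real)
      then show ?thesis by (simp add: h_def)
    qed
    also have "\<dots> \<le> cmod (ell2_inner w (B (u k))) + cmod (\<Sum>f\<in>G. c f * ell2_inner f (u k))"
      unfolding e by (rule norm_triangle_ineq)
    also have "\<dots> \<le> M * (1/4)^k" using a b by (simp add: M_def algebra_simps)
    finally show ?thesis .
  qed
  obtain k :: nat where k: "4 * M < 2^k" using real_arch_pow[of 2 "4 * M"] by auto
  have "h^k / 4 \<le> M * (1/4)^k" by (rule bound)
  then have "(1/2)^k / 4 \<le> M * ((1/2)^k * (1/2)^k)" by (simp add: h_def power_mult_distrib[symmetric])
  then have "1 \<le> 4 * M * (1/2)^k" by (simp add: field_simps)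
  then have "2^k \<le> 4 * M" by (simp add: field_simps)
  then show False using k by simp
qed

lemma ess_iff: "t \<in> real_points (ess_spectrum_on UNIV T) \<longleftrightarrow> \<not> fredholm_on UNIV (sh UNIV (complex_of_real t))"
proof -
  have "shift_op T (complex_of_real t) = sh UNIV (complex_of_real t)" using shift_eq_UNIV by blast
  then show ?thesis by (simp add: real_points_def ess_spectrum_on_def)
qed

lemma main_inf:
  "Inf (real_points (ess_spectrum_on UNIV T)) =
     Sup ((\<lambda>M0. Inf (real_points (spectrum_on M0 (mat_op H M0)))) ` {M0. finite (- M0)})"
proof -
  have "(\<lambda>M0. Inf (real_points (spectrum_on M0 (mat_op H M0)))) ` {M0. finite (- M0)} = mA ` Cof"
    unfolding Cof_def
  proof (rule image_cong)
    fix M0 assume "M0 \<in> {M0 :: 'a set. finite (- M0)}"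
    then have "M0 \<noteq> {}" using Cof_ne by simp
    then show "Inf (real_points (spectrum_on M0 (mat_op H M0))) = mA M0" by (rule spec_inf)
  qed simp
  then have r: "Sup ((\<lambda>M0. Inf (real_points (spectrum_on M0 (mat_op H M0)))) ` {M0. finite (- M0)}) = mu"
    by (simp add: mu_def)
  have "Inf (real_points (ess_spectrum_on UNIV T)) = mu"
  proof (rule cInf_eq_minimum)
    show "mu \<in> real_points (ess_spectrum_on UNIV T)" using ess_iff mu_not_fredholm by blast
    fix t assume t: "t \<in> real_points (ess_spectrum_on UNIV T)"
    show "mu \<le> t"
    proof (rule ccontr)
      assume "\<not> mu \<le> t"
      then obtain A where A: "finite (- A)" "mu - (mu - t) < mA A" using mu_approx[of "mu - t"] by auto
      then have "fredholm_on UNIV (sh UNIV (complex_of_real t))" using below_ess_fredholm[OF A(1)] by simp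
      then show False using t ess_iff by blast
    qed
  qed
  then show ?thesis using r by simp
qed

end



lemma Sup_neg: "Sup (S::real set) = - Inf (uminus ` S)"
  by (simp add: Inf_real_def image_image)

lemma invertible_neg:
  "invertible_on A (\<lambda>u x. - B u x) \<longleftrightarrow> invertible_on A B"
proof -
  have *: "invertible_on A (\<lambda>u x. - B u x)" if fr: "invertible_on A B" for B :: "('a \<Rightarrow> complex) \<Rightarrow> 'a \<Rightarrow> complex"
  proof -
    obtain S where S: "bounded_on A S" "\<forall>u\<in>ell2_on A. S (B u) = u \<and> B (S u) = u"
      using fr unfolding invertible_on_def by blast
    define S' where "S' v = S (\<lambda>x. - v x)" for v
    have "bounded_on A S'"
      unfolding bounded_on_def
    proof (intro conjI ballI)
      fix u assume u: "u \<in> ell2_on A"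
      have "(\<lambda>x. - u x) \<in> ell2_on A" by (rule V_uminus[OF u])
      then show "S' u \<in> ell2_on A" using S(1) unfolding bounded_on_def S'_def by blast
    next
      obtain C where C: "\<forall>u\<in>ell2_on A. ell2_norm (S u) \<le> C * ell2_norm u" using S(1) by (auto simp: bounded_on_def)
      show "\<exists>C. \<forall>u\<in>ell2_on A. ell2_norm (S' u) \<le> C * ell2_norm u"
      proof (intro exI ballI)
        fix u assume u: "u \<in> ell2_on A"
        show "ell2_norm (S' u) \<le> C * ell2_norm u"
        proof -
          have "ell2_norm (S (\<lambda>x. - u x)) \<le> C * ell2_norm (\<lambda>x. - u x)" using C V_uminus[OF u] by blast
          then show ?thesis using l2_uminus(2)[of u] by (simp add: S'_def)
        qed
      qed
    qed
    moreover have "\<forall>u\<in>ell2_on A. S' (\<lambda>x. - B u x) = u \<and> (\<lambda>x. - B (S' u) x) = u"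
    proof
      fix u assume u: "u \<in> ell2_on A"
      have "S' (\<lambda>x. - B u x) = u" using S(2) u by (simp add: S'_def)
      moreover have "(\<lambda>x. - B (S' u) x) = u" using S(2) V_uminus[OF u] by (simp add: S'_def)
      ultimately show "S' (\<lambda>x. - B u x) = u \<and> (\<lambda>x. - B (S' u) x) = u" by blast
    qed
    ultimately show ?thesis unfolding invertible_on_def by blast
  qed
  show ?thesis
  proof
    assume "invertible_on A (\<lambda>u x. - B u x)"
    then have "invertible_on A (\<lambda>u x. - (- B u x))" by (rule *)
    then show "invertible_on A B" by simp
  next
    assume "invertible_on A B"
    then show "invertible_on A (\<lambda>u x. - B u x)" by (rule *)
  qed
qed

lemma lincomb_neg: "(\<lambda>x. - lincomb F c x) = lincomb F (\<lambda>f. - c f)"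
  unfolding lincomb_def by (simp add: sum_negf)

lemma fredholm_neg:
  "fredholm_on A (\<lambda>u x. - B u x) \<longleftrightarrow> fredholm_on A B"
proof -
  have *: "fredholm_on A (\<lambda>u x. - B u x)" if fr: "fredholm_on A B" for B :: "('a \<Rightarrow> complex) \<Rightarrow> 'a \<Rightarrow> complex"
  proof -
    obtain F where F: "finite F" "F \<subseteq> ell2_on A"
        "\<forall>u\<in>ell2_on A. B u = (\<lambda>_. 0) \<longrightarrow> (\<exists>c. u = lincomb F c)"
      using conjunct1[OF fr[unfolded fredholm_on_def]] by (elim exE conjE) auto
    obtain G where G: "finite G" "G \<subseteq> ell2_on A"
        "\<forall>v\<in>ell2_on A. \<exists>u\<in>ell2_on A. \<exists>c. v = (\<lambda>x. B u x + lincomb G c x)"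
      using conjunct2[OF fr[unfolded fredholm_on_def]] by (elim exE conjE) auto
    have "\<forall>u\<in>ell2_on A. (\<lambda>x. - B u x) = (\<lambda>_. 0) \<longrightarrow> (\<exists>c. u = lincomb F c)"
    proof (intro ballI impI)
      fix u assume "u \<in> ell2_on A" "(\<lambda>x. - B u x) = (\<lambda>_. 0)"
      then have "B u = (\<lambda>_. 0)" by (metis (no_types) minus_equation_iff neg_0_equal_iff_equal)
      then show "\<exists>c. u = lincomb F c" using F(3) \<open>u \<in> ell2_on A\<close> by blast
    qed
    moreover have "\<forall>v\<in>ell2_on A. \<exists>u\<in>ell2_on A. \<exists>c. v = (\<lambda>x. - B u x + lincomb G c x)"
    proof
      fix v assume v: "v \<in> ell2_on A"
      obtain u c where u: "u \<in> ell2_on A" "(\<lambda>x. - v x) = (\<lambda>x. B u x + lincomb G c x)"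
        using G(3) V_uminus[OF v] by blast
      have "v = (\<lambda>x. - B u x + - lincomb G c x)"
      proof
        fix x
        have h: "- v x = B u x + lincomb G c x" using fun_cong[OF u(2), of x] by simp
        then have "v x = - (B u x + lincomb G c x)" by (metis minus_minus)
        then show "v x = - B u x + - lincomb G c x" by simp
      qed
      also have "\<dots> = (\<lambda>x. - B u x + lincomb G (\<lambda>f. - c f) x)" using lincomb_neg[of G c] by metis
      finally show "\<exists>u\<in>ell2_on A. \<exists>c. v = (\<lambda>x. - B u x + lincomb G c x)" using u(1) by blast
    qed
    ultimately show ?thesis unfolding fredholm_on_def using F(1,2) G(1,2) by blast
  qed
  show ?thesis
  proof
    assume "fredholm_on A (\<lambda>u x. - B u x)"
    then have "fredholm_on A (\<lambda>u x. - (- B u x))" by (rule *)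
    then show "fredholm_on A B" by simp
  next
    assume "fredholm_on A B"
    then show "fredholm_on A (\<lambda>u x. - B u x)" by (rule *)
  qed
qed

lemma matop_neg: "mat_op (\<lambda>x y. - H x y) A u = (\<lambda>x. - mat_op H A u x)"
  unfolding mat_op_def by (auto simp: infsum_uminus)

lemma shift_neg: "shift_op (mat_op (\<lambda>x y. - H x y) A) z = (\<lambda>u x. - shift_op (mat_op H A) (- z) u x)"
  unfolding shift_op_def matop_neg by auto

lemma uminus_image_iff: "(t::real) \<in> uminus ` S \<longleftrightarrow> - t \<in> S"
  by force

lemma rp_spec_neg:
  "real_points (spectrum_on A (mat_op (\<lambda>x y. - H x y) A)) = uminus ` real_points (spectrum_on A (mat_op H A))"
proof (rule set_eqI)
  fix t
  have "t \<in> real_points (spectrum_on A (mat_op (\<lambda>x y. - H x y) A)) \<longleftrightarrow>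
      \<not> invertible_on A (shift_op (mat_op (\<lambda>x y. - H x y) A) (complex_of_real t))"
    by (simp add: real_points_def spectrum_on_def)
  also have "\<dots> \<longleftrightarrow> \<not> invertible_on A (\<lambda>u x. - shift_op (mat_op H A) (- complex_of_real t) u x)"
    by (simp only: shift_neg)
  also have "\<dots> \<longleftrightarrow> \<not> invertible_on A (shift_op (mat_op H A) (complex_of_real (- t)))"
    by (simp only: invertible_neg of_real_minus)
  also have "\<dots> \<longleftrightarrow> - t \<in> real_points (spectrum_on A (mat_op H A))"
    by (simp add: real_points_def spectrum_on_def)
  finally show "t \<in> real_points (spectrum_on A (mat_op (\<lambda>x y. - H x y) A)) \<longleftrightarrow>
      t \<in> uminus ` real_points (spectrum_on A (mat_op H A))" by (simp only: uminus_image_iff)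
qed

lemma rp_ess_neg:
  "real_points (ess_spectrum_on A (mat_op (\<lambda>x y. - H x y) A)) = uminus ` real_points (ess_spectrum_on A (mat_op H A))"
proof (rule set_eqI)
  fix t
  have "t \<in> real_points (ess_spectrum_on A (mat_op (\<lambda>x y. - H x y) A)) \<longleftrightarrow>
      \<not> fredholm_on A (shift_op (mat_op (\<lambda>x y. - H x y) A) (complex_of_real t))"
    by (simp add: real_points_def ess_spectrum_on_def)
  also have "\<dots> \<longleftrightarrow> \<not> fredholm_on A (\<lambda>u x. - shift_op (mat_op H A) (- complex_of_real t) u x)"
    by (simp only: shift_neg)
  also have "\<dots> \<longleftrightarrow> \<not> fredholm_on A (shift_op (mat_op H A) (complex_of_real (- t)))"
    by (simp only: fredholm_neg of_real_minus)
  also have "\<dots> \<longleftrightarrow> - t \<in> real_points (ess_spectrum_on A (mat_op H A))"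
    by (simp add: real_points_def ess_spectrum_on_def)
  finally show "t \<in> real_points (ess_spectrum_on A (mat_op (\<lambda>x y. - H x y) A)) \<longleftrightarrow>
      t \<in> uminus ` real_points (ess_spectrum_on A (mat_op H A))" by (simp only: uminus_image_iff)
qed

lemma hop_neg:
  assumes "hop H"
  shows "hop (\<lambda>x y. - H x y)"
proof -
  interpret hop H by (rule assms)
  show ?thesis
  proof
    show "bounded_matrix_on UNIV (\<lambda>x y. - H x y)"
      unfolding bounded_matrix_on_def
    proof (intro conjI ballI)
      fix u :: "'a \<Rightarrow> complex" and x assume u: "u \<in> ell2_on UNIV"
      show "(\<lambda>y. - H x y * u y) summable_on UNIV"
        using row_summable[OF u, of x] summable_on_uminus[of "\<lambda>y. H x y * u y" UNIV] by simp
    next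
      show "bounded_on UNIV (mat_op (\<lambda>x y. - H x y) UNIV)"
        unfolding bounded_on_def matop_neg
      proof (intro conjI ballI exI)
        fix u :: "'a \<Rightarrow> complex" assume u: "u \<in> ell2_on UNIV"
        show "(\<lambda>x. - T u x) \<in> ell2_on UNIV" by (rule V_uminus[OF lin_V[OF T_lin u]])
        show "ell2_norm (\<lambda>x. - T u x) \<le> K * ell2_norm u" using bnd_le[OF T_bnd u] l2_uminus(2)[of "T u"] by simp
      qed
    qed
    show "self_adjoint_on UNIV (mat_op (\<lambda>x y. - H x y) UNIV)"
      unfolding self_adjoint_on_def matop_neg
    proof (intro ballI)
      fix u v :: "'a \<Rightarrow> complex" assume u: "u \<in> ell2_on UNIV" and v: "v \<in> ell2_on UNIV"
      have l: "l2 u" "l2 v" "l2 (T u)" "l2 (T v)" using u v V_l2 lin_V[OF T_lin] by blast+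
      have "ell2_inner (\<lambda>x. - T u x) v = - ell2_inner (T u) v" by (rule ip_uminus_left[OF l(3,2)])
      also have "\<dots> = - ell2_inner u (T v)" using T_herm[OF u v] by simp
      also have "\<dots> = ell2_inner u (\<lambda>x. - T v x)"
        using ip_scale_right[OF l(4) l(1), of "-1"] by simp
      finally show "ell2_inner (\<lambda>x. - T u x) v = ell2_inner u (\<lambda>x. - T v x)" .
    qed
  qed
qed

theorem main:
  fixes H :: "'a \<Rightarrow> 'a \<Rightarrow> complex"
  assumes inf: "infinite (UNIV :: 'a set)"
    and bm: "bounded_matrix_on UNIV H"
    and sa: "self_adjoint_on UNIV (mat_op H UNIV)"
  shows "(Inf (real_points (ess_spectrum_on UNIV (mat_op H UNIV))) =
           Sup ((\<lambda>M0. Inf (real_points (spectrum_on M0 (mat_op H M0)))) ` {M0. finite (- M0)})) \<and>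
         (Sup (real_points (ess_spectrum_on UNIV (mat_op H UNIV))) =
           Inf ((\<lambda>M0. Sup (real_points (spectrum_on M0 (mat_op H M0)))) ` {M0. finite (- M0)}))"
proof
  have h: "hop H" using bm sa by (simp add: hop_def)
  interpret hop_inf H by (simp add: hop_inf_def hop_inf_axioms_def h inf)
  show "Inf (real_points (ess_spectrum_on UNIV (mat_op H UNIV))) =
           Sup ((\<lambda>M0. Inf (real_points (spectrum_on M0 (mat_op H M0)))) ` {M0. finite (- M0)})"
    by (rule main_inf)
  have hn: "hop (\<lambda>x y. - H x y)" by (rule hop_neg[OF h])
  interpret N: hop_inf "\<lambda>x y. - H x y" by (simp add: hop_inf_def hop_inf_axioms_def hn inf)
  have mn: "Inf (uminus ` real_points (ess_spectrum_on UNIV (mat_op H UNIV))) =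
      Sup ((\<lambda>M0. Inf (uminus ` real_points (spectrum_on M0 (mat_op H M0)))) ` {M0. finite (- M0)})"
    using N.main_inf unfolding rp_ess_neg rp_spec_neg .
  have "Sup (real_points (ess_spectrum_on UNIV (mat_op H UNIV)))
      = - Inf (uminus ` real_points (ess_spectrum_on UNIV (mat_op H UNIV)))" by (rule Sup_neg)
  also have "\<dots> = - Sup ((\<lambda>M0. Inf (uminus ` real_points (spectrum_on M0 (mat_op H M0)))) ` {M0. finite (- M0)})"
    using mn by simp
  also have "(\<lambda>M0. Inf (uminus ` real_points (spectrum_on M0 (mat_op H M0)))) =
      (\<lambda>M0. - Sup (real_points (spectrum_on M0 (mat_op H M0))))"
    by (simp add: Sup_neg)
  also have "- Sup ((\<lambda>M0. - Sup (real_points (spectrum_on M0 (mat_op H M0)))) ` {M0. finite (- M0)})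
      = Inf ((\<lambda>M0. Sup (real_points (spectrum_on M0 (mat_op H M0)))) ` {M0. finite (- M0)})"
    by (simp add: Inf_real_def image_image)
  finally show "Sup (real_points (ess_spectrum_on UNIV (mat_op H UNIV))) =
           Inf ((\<lambda>M0. Sup (real_points (spectrum_on M0 (mat_op H M0)))) ` {M0. finite (- M0)})" .
qed


theorem theorem1p2:
  fixes \<delta> :: "'a::countable \<Rightarrow> 'a \<Rightarrow> real"
    and H :: "'a \<Rightarrow> 'a \<Rightarrow> complex"
  assumes "infinite (UNIV :: 'a set)"
    and "Metric_space UNIV \<delta>"
    and "uniformly_discrete \<delta>"
    and "bounded_geometry \<delta>"
    and "property_A \<delta>"
    and "bounded_matrix_on UNIV H"
    and "self_adjoint_on UNIV (mat_op H UNIV)"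
    and "band_dominated \<delta> H"
  shows "(Inf (real_points (ess_spectrum_on UNIV (mat_op H UNIV))) =
           Sup ((\<lambda>M0. Inf (real_points (spectrum_on M0 (mat_op H M0)))) ` {M0. finite (- M0)})) \<and>
         (Sup (real_points (ess_spectrum_on UNIV (mat_op H UNIV))) =
           Inf ((\<lambda>M0. Sup (real_points (spectrum_on M0 (mat_op H M0)))) ` {M0. finite (- M0)}))"
  by (rule main[OF assms(1) assms(6) assms(7)])

end
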